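(* Let $\mathcal A=\{1,\dots,m\}$, let $\mathbb X=\mathcal A^{\mathbb Z}$ be the full shift with left shift $S$, let $\mu_0$ be a probability measure on $\mathcal A$ with $\mu_0(\{a\})>0$ for all $a\in\mathcal A$, and let $\mu=\mu_0^{\mathbb Z}$. Let $f_1:\mathbb X\to\mathbb R$ be locally constant of window size $1$, i.e. $f_1(x)=g(x_n)$ for some fixed $n\in\mathbb Z$ and $g:\mathcal A\to\mathbb R$; let $V_x(k)=f_1(S^kx)$, $H_x=\Delta+V_x$, and let $V_{\mathrm{per}}:\mathbb Z\to\mathbb R$ have period two. For $a,b\in\mathcal A$ let $x_{ab}\in\mathbb X$ be given by $(x_{ab})_{2n}=a$, $(x_{ab})_{2n+1}=b$ for all $n\in\mathbb Z$. Then for $\mu$-almost every $x\in\mathbb X$, $$\sigma(H_x+V_{\mathrm{per}})=\bigcup_{a,b\in\mathcal A}\sigma(H_{x_{ab}}+V_{\mathrm{per}}).$$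
   Context: $\Delta$ is the discrete Laplacian $(\Delta\psi)(n)=\psi(n+1)+\psi(n-1)$ on $\ell^2(\mathbb Z)$; $(Sx)_n=x_{n+1}$. *)

theory Defs
  imports "HOL-Probability.Probability"
begin

definition l2 :: "(int \<Rightarrow> complex) set" where
  "l2 = {\<psi>. (\<lambda>k. (cmod (\<psi> k))^2) summable_on UNIV}"

definition l2norm :: "(int \<Rightarrow> complex) \<Rightarrow> real" where
  "l2norm \<psi> = sqrt (\<Sum>\<^sub>\<infinity>k. (cmod (\<psi> k))^2)"

definition laplacian :: "(int \<Rightarrow> complex) \<Rightarrow> (int \<Rightarrow> complex)" where
  "laplacian \<psi> = (\<lambda>k. \<psi> (k + 1) + \<psi> (k - 1))"

definition mult_op :: "(int \<Rightarrow> real) \<Rightarrow> (int \<Rightarrow> complex) \<Rightarrow> (int \<Rightarrow> complex)" where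
  "mult_op V \<psi> = (\<lambda>k. complex_of_real (V k) * \<psi> k)"

definition spectrum_op :: "((int \<Rightarrow> complex) \<Rightarrow> (int \<Rightarrow> complex)) \<Rightarrow> complex set" where
  "spectrum_op T = {E. \<not> (\<exists>R.
      (\<forall>\<psi>\<in>l2. R \<psi> \<in> l2
              \<and> (\<lambda>k. T (R \<psi>) k - E * R \<psi> k) = \<psi>
              \<and> R (\<lambda>k. T \<psi> k - E * \<psi> k) = \<psi>)
      \<and> (\<exists>C. \<forall>\<psi>\<in>l2. l2norm (R \<psi>) \<le> C * l2norm \<psi>))}"

definition Sshift :: "int \<Rightarrow> (int \<Rightarrow> 'a) \<Rightarrow> (int \<Rightarrow> 'a)" where
  "Sshift k x = (\<lambda>j. x (j + k))"

definition xab :: "'a \<Rightarrow> 'a \<Rightarrow> (int \<Rightarrow> 'a)" where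
  "xab a b = (\<lambda>j. if even j then a else b)"

end

theory Submission
  imports Defs
begin

definition Nsq :: "(int \<Rightarrow> complex) \<Rightarrow> real" where
  "Nsq \<psi> = (\<Sum>\<^sub>\<infinity>k. (cmod (\<psi> k))^2)"

lemma l2norm_Nsq: "l2norm \<psi> = sqrt (Nsq \<psi>)"
  by (simp add: l2norm_def Nsq_def)

lemma Nsq_nonneg: "0 \<le> Nsq \<psi>"
  by (simp add: Nsq_def infsum_nonneg)

lemma l2norm_nonneg: "0 \<le> l2norm \<psi>"
  by (simp add: l2norm_Nsq Nsq_nonneg)

lemma l2_finite_sum_le:
  assumes "\<psi> \<in> l2" "finite S"
  shows "(\<Sum>k\<in>S. (cmod (\<psi> k))^2) \<le> Nsq \<psi>"
  using assms unfolding l2_def Nsq_def by (intro finite_sum_le_infsum) auto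

lemma l2_from_bound:
  assumes "\<And>S. finite S \<Longrightarrow> (\<Sum>k\<in>S. (cmod (\<psi> k))^2) \<le> B"
  shows "\<psi> \<in> l2" "Nsq \<psi> \<le> B"
proof -
  have s: "(\<lambda>k. (cmod (\<psi> k))^2) summable_on UNIV"
    by (rule nonneg_bdd_above_summable_on) (auto intro!: bdd_aboveI2 assms)
  then show "\<psi> \<in> l2" by (simp add: l2_def)
  show "Nsq \<psi> \<le> B" unfolding Nsq_def
    by (rule infsum_le_finite_sums[OF s]) (auto intro: assms)
qed

lemma l2_point: "\<psi> \<in> l2 \<Longrightarrow> (cmod (\<psi> k))^2 \<le> Nsq \<psi>"
  using l2_finite_sum_le[of \<psi> "{k}"] by simp

lemma l2_point': "\<psi> \<in> l2 \<Longrightarrow> cmod (\<psi> k) \<le> l2norm \<psi>"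
  unfolding l2norm_Nsq by (rule real_le_rsqrt) (rule l2_point)

lemma l2_zero: "\<psi> \<in> l2 \<Longrightarrow> Nsq \<psi> = 0 \<Longrightarrow> \<psi> = (\<lambda>k. 0)"
proof (rule ext)
  fix k assume "\<psi> \<in> l2" "Nsq \<psi> = 0"
  then have "(cmod (\<psi> k))^2 \<le> 0" using l2_point by metis
  then show "\<psi> k = 0" by simp
qed

lemma shift_sum_le:
  assumes "f \<in> l2" "finite S"
  shows "(\<Sum>k\<in>S. (cmod (f (k+i)))^2) \<le> Nsq f"
proof -
  have "(\<Sum>k\<in>S. (cmod (f (k+i)))^2) = (\<Sum>k\<in>(\<lambda>k. k+i) ` S. (cmod (f k))^2)"
    by (subst sum.reindex) (auto simp: inj_on_def)
  also have "\<dots> \<le> Nsq f" using assms by (intro l2_finite_sum_le) auto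
  finally show ?thesis .
qed

lemma finite_support_l2:
  assumes "finite S" "\<And>k. k \<notin> S \<Longrightarrow> \<psi> k = 0"
  shows "\<psi> \<in> l2" "Nsq \<psi> = (\<Sum>k\<in>S. (cmod (\<psi> k))^2)"
proof -
  have "(\<lambda>k. (cmod (\<psi> k))^2) summable_on UNIV \<longleftrightarrow> (\<lambda>k. (cmod (\<psi> k))^2) summable_on S"
    by (rule summable_on_cong_neutral) (auto simp: assms)
  then show "\<psi> \<in> l2" using assms by (simp add: l2_def)
  have "Nsq \<psi> = (\<Sum>\<^sub>\<infinity>k\<in>S. (cmod (\<psi> k))^2)" unfolding Nsq_def
    by (rule infsum_cong_neutral) (auto simp: assms)
  then show "Nsq \<psi> = (\<Sum>k\<in>S. (cmod (\<psi> k))^2)" using assms by simp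
qed

lemma banded_bound:
  assumes F: "finite F" and f: "f \<in> l2" and M: "0 \<le> M"
    and b: "\<And>k. cmod (\<psi> k) \<le> (\<Sum>i\<in>F. M * cmod (f (k+i)))"
  shows "\<psi> \<in> l2" "Nsq \<psi> \<le> (M * card F)^2 * Nsq f"
proof -
  have *: "(\<Sum>k\<in>S. (cmod (\<psi> k))^2) \<le> (M * card F)^2 * Nsq f" if S: "finite S" for S
  proof -
    have "(\<Sum>k\<in>S. (cmod (\<psi> k))^2) \<le> (\<Sum>k\<in>S. (\<Sum>i\<in>F. M * cmod (f (k+i)))^2)"
      by (intro sum_mono power_mono b) auto
    also have "\<dots> \<le> (\<Sum>k\<in>S. (\<Sum>i\<in>F. (M * cmod (f (k+i)))^2) * card F)"
      by (intro sum_mono sum_squared_le_sum_of_squares)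
    also have "\<dots> = M^2 * card F * (\<Sum>i\<in>F. (\<Sum>k\<in>S. (cmod (f (k+i)))^2))"
      by (simp add: sum_distrib_left sum_distrib_right power_mult_distrib sum.swap[of _ S] mult_ac)
    also have "\<dots> \<le> M^2 * card F * (\<Sum>i\<in>F. Nsq f)"
      by (intro mult_left_mono sum_mono shift_sum_le f S) auto
    also have "\<dots> = (M * card F)^2 * Nsq f"
      by (simp add: power2_eq_square)
    finally show ?thesis .
  qed
  show "\<psi> \<in> l2" by (rule l2_from_bound(1)) (rule *)
  show "Nsq \<psi> \<le> (M * card F)^2 * Nsq f" by (rule l2_from_bound(2)) (rule *)
qed

lemma L2_set_eq: "finite S \<Longrightarrow> L2_set (\<lambda>k. cmod (\<psi> k)) S = sqrt (\<Sum>k\<in>S. (cmod (\<psi> k))^2)"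
  by (simp add: L2_set_def)

lemma l2_add:
  assumes "f \<in> l2" "g \<in> l2"
  shows "(\<lambda>k. f k + g k) \<in> l2" "l2norm (\<lambda>k. f k + g k) \<le> l2norm f + l2norm g"
proof -
  have *: "(\<Sum>k\<in>S. (cmod (f k + g k))^2) \<le> (l2norm f + l2norm g)^2" if S: "finite S" for S
  proof -
    have "L2_set (\<lambda>k. cmod (f k + g k)) S \<le> L2_set (\<lambda>k. cmod (f k) + cmod (g k)) S"
      by (rule L2_set_mono) (auto simp: norm_triangle_ineq)
    also have "\<dots> \<le> L2_set (\<lambda>k. cmod (f k)) S + L2_set (\<lambda>k. cmod (g k)) S"
      by (rule L2_set_triangle_ineq)
    also have "\<dots> \<le> l2norm f + l2norm g"
      using S assms by (auto simp: L2_set_eq l2norm_Nsq intro!: add_mono l2_finite_sum_le)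
    finally have "sqrt (\<Sum>k\<in>S. (cmod (f k + g k))^2) \<le> l2norm f + l2norm g"
      using S by (simp add: L2_set_eq)
    moreover have "0 \<le> (\<Sum>k\<in>S. (cmod (f k + g k))^2)" by (simp add: sum_nonneg)
    ultimately show ?thesis
      by (metis power_mono real_sqrt_ge_zero real_sqrt_pow2)
  qed
  show "(\<lambda>k. f k + g k) \<in> l2" by (rule l2_from_bound(1)) (rule *)
  have "Nsq (\<lambda>k. f k + g k) \<le> (l2norm f + l2norm g)^2" by (rule l2_from_bound(2)) (rule *)
  then show "l2norm (\<lambda>k. f k + g k) \<le> l2norm f + l2norm g"
    unfolding l2norm_Nsq[of "\<lambda>k. f k + g k"]
    by (simp add: real_sqrt_le_iff add_nonneg_nonneg l2norm_nonneg real_le_lsqrt)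
qed

lemma Nsq_l2norm: "Nsq \<psi> = (l2norm \<psi>)^2"
  by (simp add: l2norm_Nsq Nsq_nonneg)

lemma neumann:
  fixes L :: "(int \<Rightarrow> complex) \<Rightarrow> int \<Rightarrow> complex"
  assumes F: "finite F" and Lform: "\<And>\<psi> k. L \<psi> k = (\<Sum>i\<in>F. cf k i * \<psi> (k+i))"
    and Lb: "\<And>\<psi>. \<psi> \<in> l2 \<Longrightarrow> L \<psi> \<in> l2 \<and> l2norm (L \<psi>) \<le> \<theta> * l2norm \<psi>"
    and th0: "0 \<le> \<theta>" and th1: "\<theta> < 1" and f: "f \<in> l2"
  shows "\<exists>\<psi>\<in>l2. (\<forall>k. \<psi> k = f k + L \<psi> k) \<and> l2norm \<psi> \<le> l2norm f / (1 - \<theta>)"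
proof -
  define g where "g m = (L ^^ m) f" for m
  have gS: "g (Suc m) = L (g m)" for m by (simp add: g_def)
  have g0: "g 0 = f" by (simp add: g_def)
  have g: "g m \<in> l2 \<and> l2norm (g m) \<le> \<theta>^m * l2norm f" for m
  proof (induction m)
    case 0 then show ?case using f by (simp add: g0)
  next
    case (Suc m)
    have "L (g m) \<in> l2" "l2norm (L (g m)) \<le> \<theta> * l2norm (g m)" using Lb Suc by auto
    moreover have "\<theta> * l2norm (g m) \<le> \<theta> * (\<theta>^m * l2norm f)"
      using Suc th0 by (intro mult_left_mono) auto
    ultimately show ?case by (simp add: gS)
  qed
  have gpt: "cmod (g m k) \<le> \<theta>^m * l2norm f" for m k
    using l2_point'[of "g m" k] g[of m] by linarith
  have sumgeo: "summable (\<lambda>m. \<theta>^m * l2norm f)"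
    using th0 th1 by (intro summable_mult2 summable_geometric) auto
  have sumg: "summable (\<lambda>m. g m k)" for k
    by (rule summable_comparison_test[OF _ sumgeo]) (use gpt in auto)
  define \<psi> where "\<psi> k = (\<Sum>m. g m k)" for k
  define B where "B = l2norm f / (1 - \<theta>)"
  have B0: "0 \<le> B" using th1 by (simp add: B_def l2norm_nonneg)
  define P where "P M = (\<lambda>k. \<Sum>m<M. g m k)" for M
  have P: "P M \<in> l2 \<and> l2norm (P M) \<le> (\<Sum>m<M. \<theta>^m) * l2norm f" for M
  proof (induction M)
    case 0
    have "P 0 = (\<lambda>k. 0)" by (simp add: P_def)
    moreover have "(\<lambda>k::int. 0::complex) \<in> l2" "l2norm (\<lambda>k::int. 0::complex) = 0"
      using finite_support_l2[of "{}" "\<lambda>k. 0"] by (auto simp: l2norm_Nsq)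
    ultimately show ?case by simp
  next
    case (Suc M)
    have e: "P (Suc M) = (\<lambda>k. P M k + g M k)" by (simp add: P_def)
    have "P (Suc M) \<in> l2" "l2norm (P (Suc M)) \<le> l2norm (P M) + l2norm (g M)"
      unfolding e using l2_add[of "P M" "g M"] Suc g by auto
    moreover have "l2norm (P M) + l2norm (g M) \<le> (\<Sum>m<Suc M. \<theta>^m) * l2norm f"
      using Suc g[of M] by (simp add: algebra_simps)
    ultimately show ?case by simp
  qed
  have geo: "(\<Sum>m<M. \<theta>^m) \<le> 1 / (1 - \<theta>)" for M
  proof -
    have "(\<Sum>m<M. \<theta>^m) \<le> (\<Sum>m. \<theta>^m)"
      using th0 th1 by (intro sum_le_suminf summable_geometric) auto
    also have "\<dots> = 1 / (1 - \<theta>)" using th0 th1 by (intro suminf_geometric) auto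
    finally show ?thesis .
  qed
  have PB: "l2norm (P M) \<le> B" for M
  proof -
    have "l2norm (P M) \<le> (\<Sum>m<M. \<theta>^m) * l2norm f" using P by auto
    also have "\<dots> \<le> 1 / (1 - \<theta>) * l2norm f" by (intro mult_right_mono geo l2norm_nonneg)
    finally show ?thesis by (simp add: B_def)
  qed
  have fin: "(\<Sum>k\<in>S. (cmod (\<psi> k))^2) \<le> B^2" if S: "finite S" for S
  proof (rule LIMSEQ_le_const2)
    show "(\<lambda>M. \<Sum>k\<in>S. (cmod (P M k))^2) \<longlonglongrightarrow> (\<Sum>k\<in>S. (cmod (\<psi> k))^2)"
      unfolding P_def \<psi>_def
      by (intro tendsto_sum tendsto_power tendsto_norm summable_LIMSEQ sumg)
    show "\<exists>N. \<forall>n\<ge>N. (\<Sum>k\<in>S. (cmod (P n k))^2) \<le> B^2"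
    proof (intro exI allI impI)
      fix n :: nat
      have "(\<Sum>k\<in>S. (cmod (P n k))^2) \<le> Nsq (P n)" using P S by (intro l2_finite_sum_le) auto
      also have "\<dots> = (l2norm (P n))^2" by (simp add: Nsq_l2norm)
      also have "\<dots> \<le> B^2" using PB[of n] by (intro power_mono l2norm_nonneg) auto
      finally show "(\<Sum>k\<in>S. (cmod (P n k))^2) \<le> B^2" .
    qed
  qed
  have psil2: "\<psi> \<in> l2" by (rule l2_from_bound(1)) (rule fin)
  have "Nsq \<psi> \<le> B^2" by (rule l2_from_bound(2)) (rule fin)
  then have psiB: "l2norm \<psi> \<le> B"
    using B0 by (simp add: l2norm_Nsq real_sqrt_le_iff real_le_lsqrt)
  have eq: "\<psi> k = f k + L \<psi> k" for k
  proof -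
    have "L \<psi> k = (\<Sum>i\<in>F. cf k i * (\<Sum>m. g m (k+i)))" by (simp add: Lform \<psi>_def)
    also have "\<dots> = (\<Sum>i\<in>F. (\<Sum>m. cf k i * g m (k+i)))"
      by (intro sum.cong refl suminf_mult[symmetric] sumg)
    also have "\<dots> = (\<Sum>m. \<Sum>i\<in>F. cf k i * g m (k+i))"
      by (intro suminf_sum[symmetric] summable_mult sumg)
    also have "\<dots> = (\<Sum>m. g (Suc m) k)" by (simp add: gS Lform)
    also have "\<dots> = \<psi> k - g 0 k" unfolding \<psi>_def by (rule suminf_split_head[OF sumg])
    finally show ?thesis by (simp add: g0)
  qed
  show ?thesis using psil2 eq psiB by (auto simp: B_def)
qed

definition schr :: "(int \<Rightarrow> real) \<Rightarrow> (int \<Rightarrow> complex) \<Rightarrow> int \<Rightarrow> complex" where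
  "schr V \<psi> = (\<lambda>k. \<psi> (k+1) + \<psi> (k-1) + of_real (V k) * \<psi> k)"

lemma l2_scale:
  assumes "f \<in> l2"
  shows "(\<lambda>k. c * f k) \<in> l2" "l2norm (\<lambda>k. c * f k) \<le> cmod c * l2norm f"
proof -
  have b: "cmod (c * f k) \<le> (\<Sum>i\<in>{0}. cmod c * cmod (f (k+i)))" for k
    by (simp add: norm_mult)
  show "(\<lambda>k. c * f k) \<in> l2" using banded_bound(1)[OF _ assms _ b] by simp
  have "Nsq (\<lambda>k. c * f k) \<le> (cmod c)^2 * Nsq f" using banded_bound(2)[OF _ assms _ b] by simp
  then have "sqrt (Nsq (\<lambda>k. c * f k)) \<le> sqrt ((cmod c)^2 * Nsq f)" by (rule real_sqrt_le_mono)
  then show "l2norm (\<lambda>k. c * f k) \<le> cmod c * l2norm f"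
    by (simp add: l2norm_Nsq real_sqrt_mult)
qed

lemma l2_diff:
  assumes "f \<in> l2" "g \<in> l2"
  shows "(\<lambda>k. f k - g k) \<in> l2"
proof -
  have "(\<lambda>k. (-1) * g k) \<in> l2" using l2_scale(1)[OF assms(2)] .
  then have "(\<lambda>k. f k + (-1) * g k) \<in> l2" using l2_add(1)[OF assms(1)] by blast
  then show ?thesis by simp
qed

lemma not_in_spec:
  fixes T :: "(int \<Rightarrow> complex) \<Rightarrow> int \<Rightarrow> complex" and E :: complex
  defines "A \<equiv> (\<lambda>\<psi>. (\<lambda>k. T \<psi> k - E * \<psi> k))"
  assumes inl2: "\<And>\<psi>. \<psi> \<in> l2 \<Longrightarrow> A \<psi> \<in> l2"
    and lin: "\<And>\<psi> \<phi>. A (\<lambda>j. \<psi> j - \<phi> j) = (\<lambda>k. A \<psi> k - A \<phi> k)"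
    and inj: "\<And>\<psi>. \<psi> \<in> l2 \<Longrightarrow> A \<psi> = (\<lambda>k. 0) \<Longrightarrow> \<psi> = (\<lambda>k. 0)"
    and surj: "\<And>f. f \<in> l2 \<Longrightarrow> \<exists>\<psi>\<in>l2. A \<psi> = f \<and> l2norm \<psi> \<le> C * l2norm f"
  shows "E \<notin> spectrum_op T"
proof -
  define R where "R f = (SOME \<psi>. \<psi> \<in> l2 \<and> A \<psi> = f \<and> l2norm \<psi> \<le> C * l2norm f)" for f
  have R: "R f \<in> l2 \<and> A (R f) = f \<and> l2norm (R f) \<le> C * l2norm f" if "f \<in> l2" for f
  proof -
    have "\<exists>\<psi>. \<psi> \<in> l2 \<and> A \<psi> = f \<and> l2norm \<psi> \<le> C * l2norm f" using surj[OF that] by blast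
    then show ?thesis unfolding R_def by (rule someI_ex)
  qed
  have RA: "R (A \<psi>) = \<psi>" if "\<psi> \<in> l2" for \<psi>
  proof -
    have r: "R (A \<psi>) \<in> l2" "A (R (A \<psi>)) = A \<psi>" using R[OF inl2[OF that]] by auto
    have "A (\<lambda>j. R (A \<psi>) j - \<psi> j) = (\<lambda>k. 0)" by (simp add: lin r)
    then have "(\<lambda>j. R (A \<psi>) j - \<psi> j) = (\<lambda>k. 0)" using inj l2_diff[OF r(1) that] by blast
    then show ?thesis by (auto simp: fun_eq_iff dest: fun_cong)
  qed
  show ?thesis unfolding spectrum_op_def
  proof (clarsimp, intro exI[of _ R] conjI ballI exI[of _ C])
    fix \<psi> assume "\<psi> \<in> l2"
    then show "R \<psi> \<in> l2" "(\<lambda>k. T (R \<psi>) k - E * R \<psi> k) = \<psi>" "R (\<lambda>k. T \<psi> k - E * \<psi> k) = \<psi>"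
      "l2norm (R \<psi>) \<le> C * l2norm \<psi>"
      using R[of \<psi>] RA[of \<psi>] by (auto simp: A_def)
  qed
qed

lemma schr_l2:
  assumes B: "\<And>k. \<bar>V k\<bar> \<le> B" and psi: "\<psi> \<in> l2"
  shows "(\<lambda>k. schr V \<psi> k - E * \<psi> k) \<in> l2"
    "Nsq (\<lambda>k. schr V \<psi> k - E * \<psi> k) \<le> (3 * (1 + B + cmod E))^2 * Nsq \<psi>"
proof -
  have B0: "0 \<le> B" using B[of 0] by linarith
  have b: "cmod (schr V \<psi> k - E * \<psi> k) \<le> (\<Sum>i\<in>{-1,0,1}. (1 + B + cmod E) * cmod (\<psi> (k+i)))" for k
  proof -
    have "cmod (schr V \<psi> k - E * \<psi> k) = cmod (\<psi> (k+1) + \<psi> (k-1) + (of_real (V k) - E) * \<psi> k)"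
      by (simp add: schr_def algebra_simps)
    also have "\<dots> \<le> cmod (\<psi> (k+1)) + cmod (\<psi> (k-1)) + cmod (of_real (V k) - E) * cmod (\<psi> k)"
      by (metis norm_triangle_le norm_mult add_mono order_refl norm_triangle_ineq)
    also have "cmod (of_real (V k) - E) \<le> B + cmod E"
      using B[of k] by (metis norm_triangle_ineq4 norm_of_real add_mono order_refl order_trans)
    then have "cmod (of_real (V k) - E) * cmod (\<psi> k) \<le> (1 + B + cmod E) * cmod (\<psi> k)"
      by (intro mult_right_mono) auto
    then have "cmod (\<psi> (k+1)) + cmod (\<psi> (k-1)) + cmod (of_real (V k) - E) * cmod (\<psi> k)
        \<le> (1 + B + cmod E) * cmod (\<psi> (k+1)) + (1 + B + cmod E) * cmod (\<psi> (k-1)) + (1 + B + cmod E) * cmod (\<psi> k)"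
      using B0 by (intro add_mono) (auto simp: algebra_simps)
    finally show ?thesis by (simp add: algebra_simps)
  qed
  show "(\<lambda>k. schr V \<psi> k - E * \<psi> k) \<in> l2" using banded_bound(1)[OF _ psi _ b] B0 by simp
  show "Nsq (\<lambda>k. schr V \<psi> k - E * \<psi> k) \<le> (3 * (1 + B + cmod E))^2 * Nsq \<psi>"
    using banded_bound(2)[OF _ psi _ b] B0 by (simp add: mult_ac)
qed

lemma schr_lin: "(\<lambda>k. schr V (\<lambda>j. \<psi> j - \<phi> j) k - E * (\<psi> k - \<phi> k)) =
   (\<lambda>k. (schr V \<psi> k - E * \<psi> k) - (schr V \<phi> k - E * \<phi> k))"
  by (simp add: schr_def fun_eq_iff algebra_simps)

lemma pt_ident:
  fixes a b :: complex and r :: real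
  shows "(cmod (a - (\<i> * of_real r) * b))^2 = (cmod a)^2 + r^2 * (cmod b)^2 + 2 * r * Im (cnj a * b)"
  unfolding cmod_power2 by (simp add: algebra_simps power2_eq_square)

lemma shift_has_sum:
  fixes u :: "int \<Rightarrow> real"
  assumes "(u has_sum S) UNIV"
  shows "((\<lambda>k. u (k + c)) has_sum S) UNIV"
proof -
  have "bij_betw (\<lambda>k. k + c) UNIV UNIV"
    by (rule bij_betwI[of _ _ _ "\<lambda>k. k - c"]) auto
  then show ?thesis using assms has_sum_reindex_bij_betw by blast
qed

lemma resolvent_nonreal:
  assumes B: "\<And>k. \<bar>V k\<bar> \<le> B" and ImE: "Im E \<noteq> 0"
  shows "E \<notin> spectrum_op (schr V)"
proof -
  define t where "t = \<bar>Im E\<bar>"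
  define \<sigma> where "\<sigma> = sgn (Im E)"
  define M where "M = 3 * (1 + B + cmod E)"
  define s where "s = t / M^2"
  define r where "r = s * \<sigma>"
  define z where "z = \<i> * complex_of_real r"
  define A where "A \<phi> = (\<lambda>k. schr V \<phi> k - E * \<phi> k)" for \<phi>
  define Bop where "Bop \<phi> = (\<lambda>k. \<Sum>i\<in>{-1,0,1}. (if i = 0 then 1 - z * (of_real (V k) - E) else - z) * \<phi> (k+i))" for \<phi>
  have Bop_eq: "Bop \<phi> k = \<phi> k - z * A \<phi> k" for \<phi> k
    by (simp add: Bop_def A_def schr_def algebra_simps)
  have B0: "0 \<le> B" using B[of 0] by linarith
  have t0: "0 < t" using ImE by (simp add: t_def)
  have tM: "t < M" using abs_Im_le_cmod[of E] B0 by (simp add: t_def M_def)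
  have M0: "0 < M" using t0 tM by linarith
  have sig: "\<sigma> * Im E = t" using ImE by (simp add: \<sigma>_def t_def sgn_real_def abs_if)
  have sig2: "\<sigma>^2 = 1" using ImE by (simp add: \<sigma>_def sgn_real_def)
  have s0: "0 < s" using t0 M0 by (simp add: s_def)
  have r0: "r \<noteq> 0" using s0 sig2 by (auto simp: r_def)
  have z0: "z \<noteq> 0" using r0 by (simp add: z_def)
  have rIm: "r * Im E = s * t" by (simp add: r_def sig[symmetric] mult_ac)
  have r2: "r^2 = s^2" by (simp add: r_def power_mult_distrib sig2)
  have key: "Bop \<phi> \<in> l2 \<and> Nsq (Bop \<phi>) \<le> (1 - t^2/M^2) * Nsq \<phi>" if phi: "\<phi> \<in> l2" for \<phi>
  proof -
    define P where "P k = (cmod (\<phi> k))^2" for k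
    define b where "b = A \<phi>"
    define Q where "Q k = (cmod (b k))^2" for k
    define u where "u k = Im (cnj (\<phi> k) * \<phi> (k+1))" for k
    have bl2: "b \<in> l2" "Nsq b \<le> M^2 * Nsq \<phi>"
      using schr_l2[OF B phi, where E=E] by (auto simp: b_def A_def M_def)
    have imb: "Im (cnj (\<phi> k) * b k) = u k - u (k-1) - Im E * P k" for k
      unfolding P_def cmod_power2 by (simp add: b_def A_def schr_def u_def algebra_simps power2_eq_square)
    have pw: "(cmod (Bop \<phi> k))^2 = (1 - 2 * (r * Im E)) * P k + r^2 * Q k + 2 * r * (u k - u (k-1))" for k
    proof -
      have e1: "(cmod (Bop \<phi> k))^2 = P k + r^2 * Q k + 2 * r * Im (cnj (\<phi> k) * b k)"
        by (simp only: Bop_eq z_def pt_ident P_def Q_def b_def)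
      show ?thesis unfolding e1 imb by (simp add: algebra_simps)
    qed
    have hP: "(P has_sum Nsq \<phi>) UNIV" using phi by (simp add: l2_def P_def[abs_def] Nsq_def)
    have hQ: "(Q has_sum Nsq b) UNIV" using bl2 by (simp add: l2_def Q_def[abs_def] Nsq_def)
    have Psum: "P summable_on UNIV" using hP has_sum_imp_summable by blast
    have P1sum: "(\<lambda>k. P (k+1)) summable_on UNIV" using shift_has_sum[OF hP] has_sum_imp_summable by blast
    have "(\<lambda>k. P k + P (k+1)) summable_on UNIV" using summable_on_add[OF Psum P1sum] .
    then have gabs: "(\<lambda>k. norm (P k + P (k+1))) summable_on UNIV"
      by (simp add: P_def)
    have ub: "norm (u k) \<le> norm (P k + P (k+1))" for k
    proof -
      have "\<bar>u k\<bar> \<le> cmod (cnj (\<phi> k) * \<phi> (k+1))" unfolding u_def by (rule abs_Im_le_cmod)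
      also have "\<dots> = cmod (\<phi> k) * cmod (\<phi> (k+1))" by (simp add: norm_mult)
      also have "\<dots> \<le> P k + P (k+1)" unfolding P_def
        using sum_squares_bound[of "cmod (\<phi> k)" "cmod (\<phi> (k+1))"]
          mult_nonneg_nonneg[OF norm_ge_zero norm_ge_zero, of "\<phi> k" "\<phi> (k+1)"] by linarith
      finally show ?thesis by (simp add: P_def)
    qed
    have "(\<lambda>k. norm (u k)) summable_on UNIV" by (rule Infinite_Sum.abs_summable_on_comparison_test[OF gabs]) (use ub in auto)
    then have "u summable_on UNIV" by (rule Infinite_Sum.abs_summable_summable)
    then obtain Su where hu: "(u has_sum Su) UNIV" using summable_on_def by blast
    have hu1: "((\<lambda>k. u (k + -1)) has_sum Su) UNIV" using shift_has_sum[OF hu] .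
    have hu2: "((\<lambda>k. - u (k-1)) has_sum (- Su)) UNIV" using hu1 by (simp add: has_sum_uminus)
    have hU: "((\<lambda>k. u k - u (k-1)) has_sum 0) UNIV"
      using has_sum_add[OF hu hu2] by simp
    have hall: "((\<lambda>k. (1 - 2 * (r * Im E)) * P k + r^2 * Q k + 2 * r * (u k - u (k-1))) has_sum
        ((1 - 2 * (r * Im E)) * Nsq \<phi> + r^2 * Nsq b + 2 * r * 0)) UNIV"
      by (intro has_sum_add has_sum_cmult_right hP hQ hU)
    then have hB: "((\<lambda>k. (cmod (Bop \<phi> k))^2) has_sum ((1 - 2 * (s * t)) * Nsq \<phi> + s^2 * Nsq b)) UNIV"
      by (simp add: pw rIm r2)
    have l2B: "Bop \<phi> \<in> l2" using hB has_sum_imp_summable by (auto simp: l2_def)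
    have "Nsq (Bop \<phi>) = (1 - 2 * (s * t)) * Nsq \<phi> + s^2 * Nsq b"
      using hB by (simp add: Nsq_def infsumI)
    also have "\<dots> \<le> (1 - 2 * (s * t)) * Nsq \<phi> + s^2 * (M^2 * Nsq \<phi>)"
      using bl2 by (intro add_left_mono mult_left_mono) auto
    also have "\<dots> = (1 - t^2/M^2) * Nsq \<phi>"
      using M0 by (simp add: s_def field_simps power2_eq_square)
    finally show ?thesis using l2B by simp
  qed
  define \<theta> where "\<theta> = sqrt (1 - t^2/M^2)"
  have "t^2 \<le> M^2" using tM t0 by (intro power_mono) auto
  moreover have "0 < M^2" using M0 by simp
  ultimately have "t^2/M^2 \<le> 1" by (simp only: divide_le_eq_1_pos)
  then have q0: "0 \<le> 1 - t^2/M^2" by linarith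
  have th0: "0 \<le> \<theta>" unfolding \<theta>_def using q0 by (rule real_sqrt_ge_zero)
  have "0 < t^2/M^2" using t0 M0 by simp
  then have th1: "\<theta> < 1" unfolding \<theta>_def by (subst real_sqrt_lt_1_iff) linarith
  have Lb: "Bop \<phi> \<in> l2 \<and> l2norm (Bop \<phi>) \<le> \<theta> * l2norm \<phi>" if "\<phi> \<in> l2" for \<phi>
  proof -
    have "sqrt (Nsq (Bop \<phi>)) \<le> sqrt ((1 - t^2/M^2) * Nsq \<phi>)"
      using key[OF that] by (intro real_sqrt_le_mono) auto
    then show ?thesis using key[OF that] by (simp add: l2norm_Nsq \<theta>_def real_sqrt_mult)
  qed
  show ?thesis
  proof (rule not_in_spec[where C = "cmod z / (1 - \<theta>)"])
    fix \<psi> :: "int \<Rightarrow> complex" assume "\<psi> \<in> l2"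
    then show "(\<lambda>k. schr V \<psi> k - E * \<psi> k) \<in> l2" by (rule schr_l2[OF B])
  next
    fix \<psi> \<phi> :: "int \<Rightarrow> complex"
    show "(\<lambda>k. schr V (\<lambda>j. \<psi> j - \<phi> j) k - E * (\<psi> k - \<phi> k)) =
       (\<lambda>k. (schr V \<psi> k - E * \<psi> k) - (schr V \<phi> k - E * \<phi> k))" by (rule schr_lin)
  next
    fix \<psi> :: "int \<Rightarrow> complex" assume psi: "\<psi> \<in> l2" and A0: "(\<lambda>k. schr V \<psi> k - E * \<psi> k) = (\<lambda>k. 0)"
    have "Bop \<psi> = \<psi>" using A0 by (auto simp: fun_eq_iff Bop_eq A_def dest: fun_cong)
    then have "l2norm \<psi> \<le> \<theta> * l2norm \<psi>" using Lb[OF psi] by simp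
    then have "(1 - \<theta>) * l2norm \<psi> \<le> 0" by (simp add: algebra_simps)
    then have "l2norm \<psi> \<le> 0" using th1 by (simp add: mult_le_0_iff)
    then have "Nsq \<psi> = 0" using l2norm_nonneg[of \<psi>] Nsq_nonneg[of \<psi>] by (simp add: l2norm_Nsq)
    then show "\<psi> = (\<lambda>k. 0)" using l2_zero psi by blast
  next
    fix f :: "int \<Rightarrow> complex" assume f: "f \<in> l2"
    have f': "(\<lambda>k. z * f k) \<in> l2" using l2_scale[OF f] by blast
    obtain \<psi> where psi: "\<psi> \<in> l2" "\<And>k. \<psi> k = z * f k + Bop \<psi> k"
      and nb: "l2norm \<psi> \<le> l2norm (\<lambda>k. z * f k) / (1 - \<theta>)"
    proof -
      have "\<exists>\<psi>\<in>l2. (\<forall>k. \<psi> k = z * f k + Bop \<psi> k) \<and> l2norm \<psi> \<le> l2norm (\<lambda>k. z * f k) / (1 - \<theta>)"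
        by (rule neumann[of "{-1,0,1}" Bop "\<lambda>k i. (if i = 0 then 1 - z * (of_real (V k) - E) else - z)"])
          (use Lb th0 th1 f' in \<open>auto simp: Bop_def\<close>)
      then show ?thesis using that by blast
    qed
    have "A \<psi> = f"
    proof
      fix k
      have "z * (A \<psi> k - f k) = 0" using psi(2)[of k] by (simp add: Bop_eq algebra_simps)
      then show "A \<psi> k = f k" using z0 by simp
    qed
    moreover have "l2norm \<psi> \<le> cmod z / (1 - \<theta>) * l2norm f"
    proof -
      have "l2norm (\<lambda>k. z * f k) / (1 - \<theta>) \<le> cmod z * l2norm f / (1 - \<theta>)"
        using l2_scale(2)[OF f, of z] th1 by (intro divide_right_mono) auto
      then show ?thesis using nb by simp
    qed
    ultimately show "\<exists>\<psi>\<in>l2. (\<lambda>k. schr V \<psi> k - E * \<psi> k) = f \<and> l2norm \<psi> \<le> cmod z / (1 - \<theta>) * l2norm f"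
      using psi(1) by (auto simp: A_def)
  qed
qed

lemma schur_ident1:
  fixes \<phi> c :: "int \<Rightarrow> complex"
  assumes "c k \<noteq> 0" "c (k+1) \<noteq> 0" "c (k-1) \<noteq> 0"
  defines "\<psi> \<equiv> (\<lambda>j. \<phi> j + (\<phi> (j+1) + \<phi> (j-1)) / c j)"
  shows "c k * \<psi> k - \<psi> (k+1) - \<psi> (k-1)
     = (c k - 1/c (k+1) - 1/c (k-1)) * \<phi> k - \<phi> (k+2) / c (k+1) - \<phi> (k-2) / c (k-1)"
proof -
  have e1: "k + 1 + 1 = k + 2" "k + 1 - 1 = k" "k - 1 + 1 = k" "k - 1 - 1 = k - 2" by auto
  show ?thesis using assms(1-3) unfolding \<psi>_def e1
    by (simp add: field_simps)
qed

lemma schur_ident2: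
  fixes \<psi> c :: "int \<Rightarrow> complex"
  assumes "c (k+1) \<noteq> 0" "c (k-1) \<noteq> 0"
  defines "r \<equiv> (\<lambda>j. c j * \<psi> j - \<psi> (j+1) - \<psi> (j-1))"
  shows "r k + r (k+1) / c (k+1) + r (k-1) / c (k-1)
     = (c k - 1/c (k+1) - 1/c (k-1)) * \<psi> k - \<psi> (k+2) / c (k+1) - \<psi> (k-2) / c (k-1)"
proof -
  have e1: "k + 1 + 1 = k + 2" "k + 1 - 1 = k" "k - 1 + 1 = k" "k - 1 - 1 = k - 2" by auto
  show ?thesis using assms(1-2) unfolding r_def e1
    by (simp add: field_simps)
qed

lemma cs2:
  fixes \<alpha> \<beta> x y :: real
  assumes "0 \<le> \<alpha>" "0 \<le> \<beta>"
  shows "(\<alpha>*x + \<beta>*y)^2 \<le> (\<alpha>+\<beta>)*(\<alpha>*x^2 + \<beta>*y^2)"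
proof -
  have "(\<alpha>+\<beta>)*(\<alpha>*x^2 + \<beta>*y^2) - (\<alpha>*x + \<beta>*y)^2 = \<alpha>*\<beta>*(x-y)^2"
    by (simp add: algebra_simps power2_eq_square)
  moreover have "0 \<le> \<alpha>*\<beta>*(x-y)^2" using assms by simp
  ultimately show ?thesis by linarith
qed

lemma alg1:
  fixes W D C1 C2 W1 W2 P0 P1 P2 F :: complex
  assumes nz: "W \<noteq> 0" "D \<noteq> 0" "W1 \<noteq> 0" "W2 \<noteq> 0" "C1 \<noteq> 0" "C2 \<noteq> 0"
    and H: "W * P0 = (- (W / D)) * F + W / D * (1 / C1 / W1 * (W1 * P1) + 1 / C2 / W2 * (W2 * P2))"
  shows "D * P0 - P1 / C1 - P2 / C2 = - F"
proof -
  have e: "1 / C1 / W1 * (W1 * P1) = P1 / C1" "1 / C2 / W2 * (W2 * P2) = P2 / C2" using nz by simp_all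
  have h2: "W * P0 = W / D * (- F + P1 / C1 + P2 / C2)" using H unfolding e by (simp add: algebra_simps)
  have "W * (D * P0) = D * (W * P0)" by (simp add: algebra_simps)
  also have "\<dots> = D * (W / D * (- F + P1 / C1 + P2 / C2))" by (simp add: h2)
  also have "\<dots> = W * (- F + P1 / C1 + P2 / C2)" using nz by simp
  finally have "W * (D * P0) = W * (- F + P1 / C1 + P2 / C2)" .
  then have "D * P0 = - F + P1 / C1 + P2 / C2" using nz by simp
  then show ?thesis by (simp add: algebra_simps)
qed

lemma alg2:
  fixes W D C1 C2 W1 W2 P0 P1 P2 :: complex
  assumes nz: "W \<noteq> 0" "D \<noteq> 0" "W1 \<noteq> 0" "W2 \<noteq> 0" "C1 \<noteq> 0" "C2 \<noteq> 0"
    and H: "D * P0 - P1 / C1 - P2 / C2 = 0"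
  shows "W / D * (1 / C1 / W1 * (W1 * P1) + 1 / C2 / W2 * (W2 * P2)) = W * P0"
proof -
  have "P1 / C1 + P2 / C2 = D * P0" using H by (simp add: algebra_simps)
  moreover have "1 / C1 / W1 * (W1 * P1) + 1 / C2 / W2 * (W2 * P2) = P1 / C1 + P2 / C2" using nz by simp
  ultimately show ?thesis using nz by simp
qed
lemma triple_ab:
  fixes q \<alpha> \<beta> :: real
  assumes "q > 0" "\<alpha> < 0 \<or> (0 < \<alpha> \<and> 4*\<alpha> < q)" "\<beta> < 0 \<or> (0 < \<beta> \<and> 4*\<beta> < q)"
  shows "\<bar>\<alpha>\<bar> + \<bar>\<beta>\<bar> < \<bar>q - \<alpha> - \<beta>\<bar>"
  using assms by (auto simp: abs_if)

lemma inv_cond: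
  fixes q x :: real
  assumes "q > 0" "q * x < 0 \<or> 4 < q * x"
  shows "1/x < 0 \<or> (0 < 1/x \<and> 4*(1/x) < q)"
proof (cases "x < 0")
  case True then show ?thesis by simp
next
  case False
  then have "4 < q * x" using assms by (auto simp: mult_less_0_iff)
  moreover have x0: "0 < x" using False calculation assms(1) by (cases "x = 0") auto
  ultimately show ?thesis by (simp add: divide_less_eq mult.commute)
qed

lemma triple:
  fixes q x y :: real
  assumes "q * x < 0 \<or> 4 < q * x" "q * y < 0 \<or> 4 < q * y"
  shows "\<bar>1/x\<bar> + \<bar>1/y\<bar> < \<bar>q - 1/x - 1/y\<bar>"
proof (cases "q > 0")
  case True
  show ?thesis by (rule triple_ab[OF True inv_cond[OF True assms(1)] inv_cond[OF True assms(2)]])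
next
  case False
  have q0: "q \<noteq> 0" using assms by auto
  then have qn: "-q > 0" using False by simp
  have a: "(-q) * (-x) < 0 \<or> 4 < (-q) * (-x)" "(-q) * (-y) < 0 \<or> 4 < (-q) * (-y)" using assms by auto
  have "\<bar>1/(-x)\<bar> + \<bar>1/(-y)\<bar> < \<bar>(-q) - 1/(-x) - 1/(-y)\<bar>"
    by (rule triple_ab[OF qn inv_cond[OF qn a(1)] inv_cond[OF qn a(2)]])
  then show ?thesis by (simp add: abs_minus_commute)
qed

lemma absq: fixes D Z :: real shows "D \<noteq> 0 \<Longrightarrow> \<bar>D\<bar> * Z / (D*D) = Z / \<bar>D\<bar>"
  by (cases "D \<ge> 0") (auto simp: field_simps)

lemma l2_mult:
  assumes m: "\<And>k. cmod (m k) \<le> K" and f: "f \<in> l2"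
  shows "(\<lambda>k. m k * f k) \<in> l2" "l2norm (\<lambda>k. m k * f k) \<le> K * l2norm f"
proof -
  have K0: "0 \<le> K" using m[of 0] norm_ge_zero order_trans by blast
  have b: "cmod (m k * f k) \<le> (\<Sum>i\<in>{0}. K * cmod (f (k+i)))" for k
    using m[of k] by (simp add: norm_mult mult_right_mono)
  show "(\<lambda>k. m k * f k) \<in> l2" using banded_bound(1)[OF _ f K0 b] by simp
  have "Nsq (\<lambda>k. m k * f k) \<le> K^2 * Nsq f" using banded_bound(2)[OF _ f K0 b] by simp
  then have "sqrt (Nsq (\<lambda>k. m k * f k)) \<le> sqrt (K^2 * Nsq f)" by (rule real_sqrt_le_mono)
  then show "l2norm (\<lambda>k. m k * f k) \<le> K * l2norm f"
    using K0 by (simp add: l2norm_Nsq real_sqrt_mult)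
qed

lemma resolvent_real_dom:
  fixes V :: "int \<Rightarrow> real" and e \<theta> B cm dm dM :: real
  defines "c \<equiv> (\<lambda>k. e - V k)"
  defines "d \<equiv> (\<lambda>k. c k - 1 / c (k+1) - 1 / c (k-1))"
  assumes Bd: "\<And>k. \<bar>V k\<bar> \<le> B"
    and cm: "0 < cm" "\<And>k. cm \<le> \<bar>c k\<bar>"
    and dm: "0 < dm" "\<And>k. dm \<le> \<bar>d k\<bar>" and dM: "\<And>k. \<bar>d k\<bar> \<le> dM"
    and dom: "\<And>k. \<bar>1 / c (k+1)\<bar> + \<bar>1 / c (k-1)\<bar> \<le> \<theta> * \<bar>d k\<bar>"
    and th1: "\<theta> < 1"
  shows "complex_of_real e \<notin> spectrum_op (schr V)"
proof -
  define a where "a k = 1 / c k" for k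
  have cnz: "c k \<noteq> 0" for k using cm[of] by (metis abs_zero not_le)
  have dnz: "d k \<noteq> 0" for k using dm by (metis abs_zero not_le)
  have aabs: "\<bar>a k\<bar> \<le> 1 / cm" for k
    using cm by (simp add: a_def abs_divide frac_le)
  have dom': "\<bar>a (k+1)\<bar> + \<bar>a (k-1)\<bar> \<le> \<theta> * \<bar>d k\<bar>" for k using dom by (simp add: a_def)
  have th0: "0 \<le> \<theta>"
  proof -
    have "0 < \<bar>a 1\<bar>" using cnz by (simp add: a_def)
    then have "0 < \<theta> * \<bar>d 0\<bar>" using dom'[of 0] abs_ge_zero[of "a (-1)"] by simp
    then show ?thesis by (simp add: zero_less_mult_iff)
  qed
  define w where "w k = sqrt \<bar>d k\<bar>" for k
  have w0: "0 < w k" for k using dnz by (simp add: w_def)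
  have w2: "(w k)^2 = \<bar>d k\<bar>" for k by (simp add: w_def)
  have wlo: "sqrt dm \<le> w k" for k using dm by (simp add: w_def)
  have whi: "w k \<le> sqrt dM" for k using dM by (simp add: w_def)
  define cf where "cf k i = complex_of_real (w k / d k * (if i = 2 then a (k+1) / w (k+2) else a (k-1) / w (k-2)))" for k i :: int
  define Lop :: "(int \<Rightarrow> complex) \<Rightarrow> int \<Rightarrow> complex" where "Lop = (\<lambda>X k. \<Sum>i\<in>{-2,2}. cf k i * X (k+i))"
  have Lop_eq: "Lop X k = of_real (w k / d k) * (of_real (a (k+1) / w (k+2)) * X (k+2) + of_real (a (k-1) / w (k-2)) * X (k-2))" for X k
    by (simp add: Lop_def cf_def algebra_simps)
  have ptb: "(cmod (Lop X k))^2 \<le> \<theta> * (\<bar>a (k+1)\<bar> * (cmod (X (k+2)))^2 / \<bar>d (k+2)\<bar> + \<bar>a (k-1)\<bar> * (cmod (X (k-2)))^2 / \<bar>d (k-2)\<bar>)" for X k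
  proof -
    define \<alpha> where "\<alpha> = \<bar>a (k+1)\<bar>"
    define \<beta> where "\<beta> = \<bar>a (k-1)\<bar>"
    define x where "x = cmod (X (k+2)) / w (k+2)"
    define y where "y = cmod (X (k-2)) / w (k-2)"
    have "cmod (Lop X k) \<le> (w k / \<bar>d k\<bar>) * (\<alpha> * x + \<beta> * y)"
    proof -
      have "cmod (Lop X k) = (w k / \<bar>d k\<bar>) * cmod (of_real (a (k+1) / w (k+2)) * X (k+2) + of_real (a (k-1) / w (k-2)) * X (k-2))"
        unfolding Lop_eq norm_mult using w0[of k] by (simp add: abs_divide norm_divide)
      also have "\<dots> \<le> (w k / \<bar>d k\<bar>) * (cmod (of_real (a (k+1) / w (k+2)) * X (k+2)) + cmod (of_real (a (k-1) / w (k-2)) * X (k-2)))"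
        using w0[of k] by (intro mult_left_mono norm_triangle_ineq) auto
      also have "\<dots> = (w k / \<bar>d k\<bar>) * (\<alpha> * x + \<beta> * y)"
        using w0[of "k+2"] w0[of "k-2"]
        by (simp add: norm_mult norm_divide abs_divide \<alpha>_def \<beta>_def x_def y_def)
      finally show ?thesis .
    qed
    moreover have "0 \<le> cmod (Lop X k)" by simp
    ultimately have "(cmod (Lop X k))^2 \<le> ((w k / \<bar>d k\<bar>) * (\<alpha> * x + \<beta> * y))^2"
      by (rule power_mono)
    also have "\<dots> = (w k)^2 / \<bar>d k\<bar>^2 * (\<alpha> * x + \<beta> * y)^2" by (simp add: power_mult_distrib power_divide)
    also have "\<dots> \<le> (w k)^2 / \<bar>d k\<bar>^2 * ((\<alpha> + \<beta>) * (\<alpha> * x^2 + \<beta> * y^2))"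
      by (intro mult_left_mono cs2) (auto simp: \<alpha>_def \<beta>_def)
    also have "\<dots> = (\<alpha> + \<beta>) / \<bar>d k\<bar> * (\<alpha> * x^2 + \<beta> * y^2)"
      unfolding w2 using dnz[of k] absq by (simp add: power2_eq_square)
    also have "\<dots> \<le> \<theta> * (\<alpha> * x^2 + \<beta> * y^2)"
    proof (rule mult_right_mono)
      show "(\<alpha> + \<beta>) / \<bar>d k\<bar> \<le> \<theta>" using dom'[of k] dnz[of k]
        by (simp add: \<alpha>_def \<beta>_def divide_le_eq)
      show "0 \<le> \<alpha> * x^2 + \<beta> * y^2" by (simp add: \<alpha>_def \<beta>_def)
    qed
    also have "\<alpha> * x^2 + \<beta> * y^2 = \<bar>a (k+1)\<bar> * (cmod (X (k+2)))^2 / \<bar>d (k+2)\<bar> + \<bar>a (k-1)\<bar> * (cmod (X (k-2)))^2 / \<bar>d (k-2)\<bar>"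
      by (simp add: \<alpha>_def \<beta>_def x_def y_def power_divide w2)
    finally show ?thesis .
  qed
  have Lb: "Lop X \<in> l2 \<and> l2norm (Lop X) \<le> \<theta> * l2norm X" if chi: "X \<in> l2" for X
  proof -
    define h1 where "h1 j = \<bar>a (j-1)\<bar> * (cmod (X j))^2 / \<bar>d j\<bar>" for j
    define h2 where "h2 j = \<bar>a (j+1)\<bar> * (cmod (X j))^2 / \<bar>d j\<bar>" for j
    have h1n: "0 \<le> h1 j" for j by (simp add: h1_def)
    have h2n: "0 \<le> h2 j" for j by (simp add: h2_def)
    have h12: "h1 j + h2 j \<le> \<theta> * (cmod (X j))^2" for j
    proof -
      have "h1 j + h2 j = (\<bar>a (j+1)\<bar> + \<bar>a (j-1)\<bar>) / \<bar>d j\<bar> * (cmod (X j))^2"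
        by (simp add: h1_def h2_def algebra_simps add_divide_distrib)
      also have "\<dots> \<le> \<theta> * (cmod (X j))^2"
        using dom'[of j] dnz[of j] by (intro mult_right_mono) (auto simp: divide_le_eq)
      finally show ?thesis .
    qed
    have fs: "(\<Sum>k\<in>S. (cmod (Lop X k))^2) \<le> \<theta>^2 * Nsq X" if S: "finite S" for S
    proof -
      define U where "U = (\<lambda>k. k+2) ` S \<union> (\<lambda>k. k-2) ` S"
      have U: "finite U" using S by (simp add: U_def)
      have "(\<Sum>k\<in>S. (cmod (Lop X k))^2) \<le> (\<Sum>k\<in>S. \<theta> * (h1 (k+2) + h2 (k-2)))"
      proof (intro sum_mono)
        fix k
        have e: "h1 (k+2) = \<bar>a (k+1)\<bar> * (cmod (X (k+2)))^2 / \<bar>d (k+2)\<bar>"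
          "h2 (k-2) = \<bar>a (k-1)\<bar> * (cmod (X (k-2)))^2 / \<bar>d (k-2)\<bar>"
          by (simp_all add: h1_def h2_def add.commute)
        show "(cmod (Lop X k))^2 \<le> \<theta> * (h1 (k+2) + h2 (k-2))" unfolding e by (rule ptb)
      qed
      also have "\<dots> = \<theta> * ((\<Sum>k\<in>S. h1 (k+2)) + (\<Sum>k\<in>S. h2 (k-2)))"
        by (simp only: distrib_left sum_distrib_left sum.distrib)
      also have "(\<Sum>k\<in>S. h1 (k+2)) = (\<Sum>j\<in>(\<lambda>k. k+2) ` S. h1 j)"
        by (subst sum.reindex) (auto simp: inj_on_def)
      also have "(\<Sum>k\<in>S. h2 (k-2)) = (\<Sum>j\<in>(\<lambda>k. k-2) ` S. h2 j)"
        by (subst sum.reindex) (auto simp: inj_on_def)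
      also have "(\<Sum>j\<in>(\<lambda>k. k+2) ` S. h1 j) + (\<Sum>j\<in>(\<lambda>k. k-2) ` S. h2 j) \<le> (\<Sum>j\<in>U. h1 j) + (\<Sum>j\<in>U. h2 j)"
        by (intro add_mono sum_mono2 U) (auto simp: U_def h1n h2n)
      also have "\<dots> = (\<Sum>j\<in>U. h1 j + h2 j)" by (simp add: sum.distrib)
      also have "\<dots> \<le> (\<Sum>j\<in>U. \<theta> * (cmod (X j))^2)" by (intro sum_mono h12)
      also have "\<dots> = \<theta> * (\<Sum>j\<in>U. (cmod (X j))^2)" by (simp add: sum_distrib_left)
      also have "\<dots> \<le> \<theta> * Nsq X" using th0 by (intro mult_left_mono l2_finite_sum_le chi U)
      finally have "(\<Sum>k\<in>S. (cmod (Lop X k))^2) \<le> \<theta> * (\<theta> * Nsq X)"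
        using th0 by (simp add: mult_left_mono)
      then show ?thesis by (simp add: power2_eq_square mult_ac)
    qed
    have "Lop X \<in> l2" by (rule l2_from_bound(1)) (rule fs)
    moreover have "Nsq (Lop X) \<le> \<theta>^2 * Nsq X" by (rule l2_from_bound(2)) (rule fs)
    then have "sqrt (Nsq (Lop X)) \<le> sqrt (\<theta>^2 * Nsq X)" by (rule real_sqrt_le_mono)
    then have "l2norm (Lop X) \<le> \<theta> * l2norm X" using th0 by (simp add: l2norm_Nsq real_sqrt_mult)
    ultimately show ?thesis by simp
  qed
  define cc where "cc k = complex_of_real (c k)" for k
  have ccnz: "cc k \<noteq> 0" for k using cnz by (simp add: cc_def)
  have wc: "complex_of_real (w k) \<noteq> 0" for k using w0[of k] by simp
  have dc: "complex_of_real (d k) \<noteq> 0" for k using dnz[of k] by simp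
  have dcc: "complex_of_real (d k) = cc k - 1 / cc (k+1) - 1 / cc (k-1)" for k
    by (simp add: d_def cc_def)
  have Lop_eq2: "Lop X k = of_real (w k) / of_real (d k) * (1 / cc (k+1) / of_real (w (k+2)) * X (k+2)
      + 1 / cc (k-1) / of_real (w (k-2)) * X (k-2))" for X k
    by (simp add: Lop_eq a_def cc_def)
  have sqdm: "0 < sqrt dm" using dm by simp
  have f2b: "cmod (- complex_of_real (w k / d k)) \<le> sqrt dM / dm" for k
  proof -
    have "cmod (- complex_of_real (w k / d k)) = w k / \<bar>d k\<bar>" using w0[of k] by (simp add: abs_divide norm_divide)
    also have "\<dots> \<le> sqrt dM / dm" using whi[of k] dm w0[of k] dM[of k] by (intro frac_le) auto
    finally show ?thesis .
  qed
  have winvb: "cmod (complex_of_real (1 / w k)) \<le> 1 / sqrt dm" for k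
    using wlo[of k] sqdm w0[of k] by (simp add: frac_le norm_divide)
  have wb: "cmod (complex_of_real (w k)) \<le> sqrt dM" for k using whi[of k] w0[of k] by simp
  define M1 where "M1 = 1 + 1 / cm"
  have M10: "0 \<le> M1" using cm by (simp add: M1_def)
  have icb: "1 / \<bar>c k\<bar> \<le> 1 / cm" for k using cm by (simp add: frac_le)
  define Cst where "Cst = 3 * M1 * (1 / sqrt dm) * (sqrt dM / dm) / (1 - \<theta>)"
  show ?thesis
  proof (rule not_in_spec[where C = Cst])
    fix \<psi> :: "int \<Rightarrow> complex" assume "\<psi> \<in> l2"
    then show "(\<lambda>k. schr V \<psi> k - complex_of_real e * \<psi> k) \<in> l2" by (rule schr_l2[OF Bd])
  next
    fix \<psi> \<phi> :: "int \<Rightarrow> complex"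
    show "(\<lambda>k. schr V (\<lambda>j. \<psi> j - \<phi> j) k - complex_of_real e * (\<psi> k - \<phi> k)) =
       (\<lambda>k. (schr V \<psi> k - complex_of_real e * \<psi> k) - (schr V \<phi> k - complex_of_real e * \<phi> k))"
      by (rule schr_lin)
  next
    fix \<psi> :: "int \<Rightarrow> complex" assume psi: "\<psi> \<in> l2"
      and A0: "(\<lambda>k. schr V \<psi> k - complex_of_real e * \<psi> k) = (\<lambda>k. 0)"
    have r0: "cc k * \<psi> k - \<psi> (k+1) - \<psi> (k-1) = 0" for k
    proof -
      have "schr V \<psi> k - complex_of_real e * \<psi> k = 0" using fun_cong[OF A0, of k] by simp
      then show ?thesis by (simp add: schr_def cc_def c_def algebra_simps)
    qed
    have K0: "of_real (d k) * \<psi> k - \<psi> (k+2) / cc (k+1) - \<psi> (k-2) / cc (k-1) = 0" for k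
    proof -
      have "(cc k * \<psi> k - \<psi> (k+1) - \<psi> (k-1)) + (cc (k+1) * \<psi> (k+1) - \<psi> (k+1+1) - \<psi> (k+1-1)) / cc (k+1)
         + (cc (k-1) * \<psi> (k-1) - \<psi> (k-1+1) - \<psi> (k-1-1)) / cc (k-1)
         = (cc k - 1/cc (k+1) - 1/cc (k-1)) * \<psi> k - \<psi> (k+2) / cc (k+1) - \<psi> (k-2) / cc (k-1)"
        using schur_ident2[of cc k \<psi>] ccnz by simp
      moreover have "cc (k+1) * \<psi> (k+1) - \<psi> (k+1+1) - \<psi> (k+1-1) = 0" using r0[of "k+1"] by simp
      moreover have "cc (k-1) * \<psi> (k-1) - \<psi> (k-1+1) - \<psi> (k-1-1) = 0" using r0[of "k-1"] by simp
      ultimately show ?thesis using r0[of k] by (simp add: dcc)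
    qed
    define X where "X k = complex_of_real (w k) * \<psi> k" for k
    have Xl2: "X \<in> l2" using l2_mult(1)[OF wb psi] by (simp add: X_def[abs_def])
    have LX: "Lop X = X"
    proof
      fix k
      show "Lop X k = X k" unfolding Lop_eq2 X_def
        by (rule alg2[OF wc dc wc wc ccnz ccnz K0])
    qed
    have "l2norm X \<le> \<theta> * l2norm X" using Lb[OF Xl2] LX by simp
    then have "(1 - \<theta>) * l2norm X \<le> 0" by (simp add: algebra_simps)
    then have "l2norm X \<le> 0" using th1 by (simp add: mult_le_0_iff)
    then have "Nsq X = 0" using l2norm_nonneg[of X] Nsq_nonneg[of X] by (simp add: l2norm_Nsq)
    then have "X = (\<lambda>k. 0)" using l2_zero Xl2 by blast
    then show "\<psi> = (\<lambda>k. 0)" using wc by (auto simp: fun_eq_iff X_def dest: fun_cong)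
  next
    fix f :: "int \<Rightarrow> complex" assume f: "f \<in> l2"
    define f2 where "f2 k = (- complex_of_real (w k / d k)) * f k" for k
    have f2l2: "f2 \<in> l2" "l2norm f2 \<le> sqrt dM / dm * l2norm f"
      using l2_mult[OF f2b f] by (simp_all add: f2_def[abs_def])
    obtain X where X: "X \<in> l2" "\<And>k. X k = f2 k + Lop X k" and Xb: "l2norm X \<le> l2norm f2 / (1 - \<theta>)"
    proof -
      have "\<exists>X\<in>l2. (\<forall>k. X k = f2 k + Lop X k) \<and> l2norm X \<le> l2norm f2 / (1 - \<theta>)"
        by (rule neumann[of "{-2,2}" Lop cf]) (use Lb th0 th1 f2l2 in \<open>auto simp: Lop_def\<close>)
      then show ?thesis using that by blast
    qed
    define \<phi> where "\<phi> k = complex_of_real (1 / w k) * X k" for k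
    have phil2: "\<phi> \<in> l2" "l2norm \<phi> \<le> 1 / sqrt dm * l2norm X"
      using l2_mult[OF winvb X(1)] by (simp_all add: \<phi>_def[abs_def])
    have Xk: "X k = complex_of_real (w k) * \<phi> k" for k using wc[of k] by (simp add: \<phi>_def)
    have eqK: "of_real (d k) * \<phi> k - \<phi> (k+2) / cc (k+1) - \<phi> (k-2) / cc (k-1) = - f k" for k
    proof (rule alg1[OF wc dc wc wc ccnz ccnz])
      show "complex_of_real (w k) * \<phi> k = - (complex_of_real (w k) / complex_of_real (d k)) * f k +
          complex_of_real (w k) / complex_of_real (d k) * (1 / cc (k + 1) / complex_of_real (w (k + 2)) *
          (complex_of_real (w (k + 2)) * \<phi> (k + 2)) + 1 / cc (k - 1) / complex_of_real (w (k - 2)) *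
          (complex_of_real (w (k - 2)) * \<phi> (k - 2)))"
        using X(2)[of k] unfolding Lop_eq2 Xk by (simp add: f2_def)
    qed
    define \<psi> where "\<psi> = (\<lambda>j. \<phi> j + (\<phi> (j+1) + \<phi> (j-1)) / cc j)"
    have psib: "cmod (\<psi> k) \<le> (\<Sum>i\<in>{-1,0,1}. M1 * cmod (\<phi> (k+i)))" for k
    proof -
      have "cmod (\<psi> k) \<le> cmod (\<phi> k) + (cmod (\<phi> (k+1)) + cmod (\<phi> (k-1))) / \<bar>c k\<bar>"
        unfolding \<psi>_def using norm_triangle_ineq[of "\<phi> k" "(\<phi> (k+1) + \<phi> (k-1)) / cc k"]
          norm_triangle_ineq[of "\<phi> (k+1)" "\<phi> (k-1)"] cnz[of k]
        by (simp add: norm_divide cc_def divide_right_mono order_trans)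
      also have "\<dots> \<le> M1 * cmod (\<phi> k) + M1 * cmod (\<phi> (k+1)) + M1 * cmod (\<phi> (k-1))"
      proof -
        have "(cmod (\<phi> (k+1)) + cmod (\<phi> (k-1))) / \<bar>c k\<bar> \<le> (cmod (\<phi> (k+1)) + cmod (\<phi> (k-1))) * (1 / cm)"
          using icb[of k] by (metis divide_inverse inverse_eq_divide mult_left_mono add_nonneg_nonneg norm_ge_zero)
        moreover have "cmod (\<phi> k) \<le> M1 * cmod (\<phi> k)" "(1/cm) * cmod (\<phi> (k+1)) \<le> M1 * cmod (\<phi> (k+1))"
          "(1/cm) * cmod (\<phi> (k-1)) \<le> M1 * cmod (\<phi> (k-1))"
          using cm divide_nonneg_pos[OF norm_ge_zero cm(1), of "\<phi> k"] by (auto simp: M1_def distrib_right)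
        ultimately show ?thesis by (simp add: algebra_simps)
      qed
      finally show ?thesis by (simp add: algebra_simps)
    qed
    have psil2: "\<psi> \<in> l2" using banded_bound(1)[OF _ phil2(1) M10 psib] by simp
    have "Nsq \<psi> \<le> (M1 * 3)^2 * Nsq \<phi>" using banded_bound(2)[OF _ phil2(1) M10 psib] by simp
    then have "sqrt (Nsq \<psi>) \<le> sqrt ((M1 * 3)^2 * Nsq \<phi>)" by (rule real_sqrt_le_mono)
    then have psib2: "l2norm \<psi> \<le> M1 * 3 * l2norm \<phi>" using M10 by (simp add: l2norm_Nsq real_sqrt_mult)
    have "schr V \<psi> k - complex_of_real e * \<psi> k = f k" for k
    proof -
      have "cc k * \<psi> k - \<psi> (k+1) - \<psi> (k-1) = of_real (d k) * \<phi> k - \<phi> (k+2) / cc (k+1) - \<phi> (k-2) / cc (k-1)"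
        unfolding \<psi>_def dcc by (rule schur_ident1[OF ccnz ccnz ccnz])
      then have "cc k * \<psi> k - \<psi> (k+1) - \<psi> (k-1) = - f k" using eqK by simp
      then show ?thesis by (simp add: schr_def cc_def c_def algebra_simps)
    qed
    moreover have "l2norm \<psi> \<le> Cst * l2norm f"
    proof -
      have "l2norm \<psi> \<le> M1 * 3 * l2norm \<phi>" by (rule psib2)
      also have "\<dots> \<le> M1 * 3 * (1 / sqrt dm * l2norm X)" using phil2 M10 by (intro mult_left_mono) auto
      also have "\<dots> \<le> M1 * 3 * (1 / sqrt dm * (l2norm f2 / (1 - \<theta>)))" using Xb M10 sqdm
        by (intro mult_left_mono) auto
      also have "\<dots> \<le> M1 * 3 * (1 / sqrt dm * ((sqrt dM / dm * l2norm f) / (1 - \<theta>)))" using f2l2 M10 sqdm th1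
        by (intro mult_left_mono divide_right_mono) auto
      also have "\<dots> = Cst * l2norm f" by (simp add: Cst_def mult_ac)
      finally show ?thesis .
    qed
    ultimately show "\<exists>\<psi>\<in>l2. (\<lambda>k. schr V \<psi> k - complex_of_real e * \<psi> k) = f \<and> l2norm \<psi> \<le> Cst * l2norm f"
      using psil2 by auto
  qed
qed

lemma resolvent:
  fixes V :: "int \<Rightarrow> real" and Ue Uo :: "real set" and E :: complex
  assumes fin: "finite Ue" "finite Uo" and VU: "\<And>k. V k \<in> (if even k then Ue else Uo)"
    and band: "\<And>u v x. u \<in> Ue \<Longrightarrow> v \<in> Uo \<Longrightarrow> (E - of_real u) * (E - of_real v) = of_real x \<Longrightarrow> x < 0 \<or> 4 < x"
  shows "E \<notin> spectrum_op (schr V)"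
proof -
  define U where "U = Ue \<union> Uo"
  have finU: "finite U" using fin by (simp add: U_def)
  have VinU: "V k \<in> U" for k using VU[of k] by (auto simp: U_def split: if_splits)
  define B where "B = Max (abs ` U)"
  have Bd: "\<bar>V k\<bar> \<le> B" for k unfolding B_def using finU VinU[of k] by (intro Max_ge) auto
  show ?thesis
  proof (cases "Im E = 0")
    case False
    then show ?thesis by (rule resolvent_nonreal[OF Bd])
  next
    case True
    define e where "e = Re E"
    have Ee: "E = complex_of_real e" using True by (simp add: e_def complex_eq_iff)
    have pair: "(e - V k) * (e - V (k+1)) < 0 \<or> 4 < (e - V k) * (e - V (k+1))" for k
    proof (cases "even k")
      case True
      then have "V k \<in> Ue" "V (k+1) \<in> Uo" using VU[of k] VU[of "k+1"] by auto
      then show ?thesis by (rule band) (simp add: Ee)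
    next
      case False
      then have "V (k+1) \<in> Ue" "V k \<in> Uo" using VU[of k] VU[of "k+1"] by auto
      then have "(e - V (k+1)) * (e - V k) < 0 \<or> 4 < (e - V (k+1)) * (e - V k)"
        by (rule band) (simp add: Ee)
      then show ?thesis by (simp add: mult.commute)
    qed
    define c where "c k = e - V k" for k
    have cnz: "c k \<noteq> 0" for k using pair[of k] by (auto simp: c_def)
    have p1: "c k * c (k+1) < 0 \<or> 4 < c k * c (k+1)" for k using pair[of k] by (simp add: c_def)
    have p2: "c k * c (k-1) < 0 \<or> 4 < c k * c (k-1)" for k
      using pair[of "k-1"] by (simp add: c_def mult.commute)
    have tri: "\<bar>1/c (k+1)\<bar> + \<bar>1/c (k-1)\<bar> < \<bar>c k - 1/c (k+1) - 1/c (k-1)\<bar>" for k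
      by (rule triple[OF p1 p2])
    define D where "D t = (e - fst t) - 1/(e - fst (snd t)) - 1/(e - snd (snd t))" for t :: "real \<times> real \<times> real"
    define \<rho> where "\<rho> t = (\<bar>1/(e - fst (snd t))\<bar> + \<bar>1/(e - snd (snd t))\<bar>) / \<bar>D t\<bar>" for t :: "real \<times> real \<times> real"
    define tr where "tr k = (V k, V (k+1), V (k-1))" for k
    define Ts where "Ts = range tr"
    have finT: "finite Ts"
    proof (rule finite_subset)
      show "Ts \<subseteq> U \<times> U \<times> U" using VinU by (auto simp: Ts_def tr_def)
      show "finite (U \<times> U \<times> U)" using finU by simp
    qed
    have Tne: "Ts \<noteq> {}" by (simp add: Ts_def)
    have Dk: "D (tr k) = c k - 1/c (k+1) - 1/c (k-1)" for k by (simp add: D_def tr_def c_def)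
    have rk: "\<rho> (tr k) = (\<bar>1/c (k+1)\<bar> + \<bar>1/c (k-1)\<bar>) / \<bar>c k - 1/c (k+1) - 1/c (k-1)\<bar>" for k
      by (simp add: \<rho>_def Dk) (simp add: tr_def c_def)
    have Dpos: "0 < \<bar>D t\<bar>" if tT: "t \<in> Ts" for t
    proof -
      obtain k where "t = tr k" using tT unfolding Ts_def by blast
      then show ?thesis using tri[of k] Dk[of k] by (smt (verit) abs_ge_zero)
    qed
    have rlt: "\<rho> t < 1" if tT: "t \<in> Ts" for t
    proof -
      obtain k where k: "t = tr k" using tT unfolding Ts_def by blast
      show ?thesis unfolding k rk using tri[of k] by (simp add: divide_less_eq)
    qed
    define \<theta> where "\<theta> = Max (\<rho> ` Ts)"
    have th1: "\<theta> < 1" unfolding \<theta>_def using finT Tne rlt by (subst Max_less_iff) auto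
    have thk: "\<rho> (tr k) \<le> \<theta>" for k unfolding \<theta>_def using finT by (intro Max_ge) (auto simp: Ts_def)
    define dm where "dm = Min ((\<lambda>t. \<bar>D t\<bar>) ` Ts)"
    define dM where "dM = Max ((\<lambda>t. \<bar>D t\<bar>) ` Ts)"
    have dm0: "0 < dm" unfolding dm_def using finT Tne Dpos by (subst Min_gr_iff) auto
    have dmk: "dm \<le> \<bar>c k - 1/c (k+1) - 1/c (k-1)\<bar>" for k
      unfolding dm_def Dk[symmetric] using finT by (intro Min_le) (auto simp: Ts_def)
    have dMk: "\<bar>c k - 1/c (k+1) - 1/c (k-1)\<bar> \<le> dM" for k
      unfolding dM_def Dk[symmetric] using finT by (intro Max_ge) (auto simp: Ts_def)
    define cm where "cm = Min ((\<lambda>u. \<bar>e - u\<bar>) ` range V)"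
    have finV: "finite (range V)" using finU VinU by (meson finite_subset image_subsetI)
    have cm0: "0 < cm" unfolding cm_def using finV cnz by (subst Min_gr_iff) (auto simp: c_def)
    have cmk: "cm \<le> \<bar>c k\<bar>" for k unfolding cm_def c_def using finV by (intro Min_le) auto
    have dom: "\<bar>1/c (k+1)\<bar> + \<bar>1/c (k-1)\<bar> \<le> \<theta> * \<bar>c k - 1/c (k+1) - 1/c (k-1)\<bar>" for k
    proof -
      have pos: "0 < \<bar>c k - 1/c (k+1) - 1/c (k-1)\<bar>" using tri[of k] by (smt (verit) abs_ge_zero)
      have "\<rho> (tr k) \<le> \<theta>" by (rule thk)
      then show ?thesis unfolding rk using pos by (simp add: divide_le_eq mult.commute)
    qed
    have "complex_of_real e \<notin> spectrum_op (schr V)"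
      by (rule resolvent_real_dom[OF Bd _ _ dm0 _ _ _ th1, of cm])
         (use cm0 cmk dmk dMk dom in \<open>simp_all add: c_def\<close>)
    then show ?thesis by (simp add: Ee)
  qed
qed

lemma bloch_exists:
  fixes p q :: complex and c :: real
  assumes pq: "p * q = of_real c" and c0: "0 \<le> c" and c4: "c \<le> 4"
  shows "\<exists>\<alpha> \<beta> \<theta>. (\<alpha> \<noteq> 0 \<or> \<beta> \<noteq> 0) \<and> \<beta> * (1 + cis (-\<theta>)) = p * \<alpha> \<and> \<alpha> * (1 + cis \<theta>) = q * \<beta>"
proof -
  define \<theta> where "\<theta> = arccos (c/2 - 1)"
  have cos: "cos \<theta> = c/2 - 1" unfolding \<theta>_def using c0 c4 by (intro cos_arccos) auto
  have prod: "(1 + cis (-\<theta>)) * (1 + cis \<theta>) = of_real c"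
  proof -
    have "(1 + cis (-\<theta>)) * (1 + cis \<theta>) = 2 + (cis \<theta> + cis (-\<theta>))"
      by (simp add: algebra_simps cis_mult)
    also have "cis \<theta> + cis (-\<theta>) = of_real (2 * cos \<theta>)"
      by (simp add: complex_eq_iff cis.sel)
    finally show ?thesis by (simp add: cos)
  qed
  show ?thesis
  proof (cases "p \<noteq> 0 \<or> cis \<theta> \<noteq> -1")
    case True
    have ne: "1 + cis (-\<theta>) \<noteq> 0 \<or> p \<noteq> 0"
    proof (cases "p \<noteq> 0")
      case False
      then have z: "cis \<theta> \<noteq> -1" using True by simp
      have "cis (-\<theta>) \<noteq> -1"
      proof
        assume "cis (-\<theta>) = -1"
        then have "cnj (cis (-\<theta>)) = -1" by simp
        then show False using z by (simp add: cis_cnj)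
      qed
      then show ?thesis by (metis add_eq_0_iff add.commute)
    qed simp
    show ?thesis
      by (rule exI[of _ "1 + cis (-\<theta>)"], rule exI[of _ p], rule exI[of _ \<theta>])
         (use ne prod pq in \<open>auto simp: mult.commute\<close>)
  next
    case False
    then have p0: "p = 0" and z: "cis \<theta> = -1" by auto
    show ?thesis by (rule exI[of _ 1], rule exI[of _ 0], rule exI[of _ \<theta>]) (simp add: p0 z)
  qed
qed

lemma weyl:
  fixes V :: "int \<Rightarrow> real" and u v c B :: real and E :: complex
  assumes Bd: "\<And>k. \<bar>V k\<bar> \<le> B"
    and pq: "(E - of_real u) * (E - of_real v) = of_real c" and c0: "0 \<le> c" and c4: "c \<le> 4"
    and blk: "\<And>L::nat. \<exists>a::int. \<forall>k. 2*a - 1 \<le> k \<and> k \<le> 2*a + 2*int L + 2 \<longrightarrow> V k = (if even k then u else v)"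
  shows "E \<in> spectrum_op (schr V)"
proof (rule ccontr)
  assume "E \<notin> spectrum_op (schr V)"
  then obtain R C where RR: "\<And>\<psi>. \<psi> \<in> l2 \<Longrightarrow> R \<psi> \<in> l2 \<and> (\<lambda>k. schr V (R \<psi>) k - E * R \<psi> k) = \<psi>
              \<and> R (\<lambda>k. schr V \<psi> k - E * \<psi> k) = \<psi>"
    and RC: "\<And>\<psi>. \<psi> \<in> l2 \<Longrightarrow> l2norm (R \<psi>) \<le> C * l2norm \<psi>"
    unfolding spectrum_op_def by blast
  obtain \<alpha> \<beta> \<theta> where ab: "\<alpha> \<noteq> 0 \<or> \<beta> \<noteq> 0" and e1: "\<beta> * (1 + cis (-\<theta>)) = (E - of_real u) * \<alpha>"
    and e2: "\<alpha> * (1 + cis \<theta>) = (E - of_real v) * \<beta>"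
    using bloch_exists[OF pq c0 c4] by blast
  define V0 where "V0 k = (if even k then u else v)" for k :: int
  define \<phi>0 where "\<phi>0 k = (if even k then \<alpha> else \<beta>) * cis (\<theta> * of_int (k div 2))" for k :: int
  have ph_even: "\<phi>0 (2*j) = \<alpha> * cis (\<theta> * of_int j)" for j
    by (simp add: \<phi>0_def)
  have ph_odd: "\<phi>0 (2*j+1) = \<beta> * cis (\<theta> * of_int j)" for j
  proof -
    have "(2*j+1) div 2 = j" by auto
    then show ?thesis by (simp add: \<phi>0_def)
  qed
  have ph_odd': "\<phi>0 (2*j-1) = \<beta> * cis (\<theta> * of_int j) * cis (-\<theta>)" for j
  proof -
    have "2*j-1 = 2*(j-1)+1" by simp
    then have "\<phi>0 (2*j-1) = \<beta> * cis (\<theta> * of_int (j-1))" using ph_odd[of "j-1"] by simp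
    also have "cis (\<theta> * of_int (j-1)) = cis (\<theta> * of_int j) * cis (-\<theta>)"
      by (simp add: cis_mult algebra_simps)
    finally show ?thesis by simp
  qed
  have ph_even': "\<phi>0 (2*j+1+1) = \<alpha> * cis (\<theta> * of_int j) * cis \<theta>" for j
  proof -
    have "2*j+1+1 = 2*(j+1)" by simp
    then have "\<phi>0 (2*j+1+1) = \<alpha> * cis (\<theta> * of_int (j+1))" using ph_even[of "j+1"] by (simp add: add.commute)
    also have "cis (\<theta> * of_int (j+1)) = cis (\<theta> * of_int j) * cis \<theta>"
      by (simp add: cis_mult algebra_simps)
    finally show ?thesis by simp
  qed
  have eig: "schr V0 \<phi>0 k - E * \<phi>0 k = 0" for k
  proof (cases "even k")
    case True
    then obtain j where k: "k = 2*j" by (auto elim: evenE)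
    have "schr V0 \<phi>0 k - E * \<phi>0 k = \<phi>0 (2*j+1) + \<phi>0 (2*j-1) + (of_real u - E) * \<phi>0 (2*j)"
      unfolding k by (simp add: schr_def V0_def algebra_simps)
    also have "\<dots> = cis (\<theta> * of_int j) * (\<beta> * (1 + cis (-\<theta>)) - (E - of_real u) * \<alpha>)"
      unfolding ph_odd ph_odd' ph_even by (simp add: algebra_simps)
    finally show ?thesis by (simp add: e1)
  next
    case False
    then obtain j where k: "k = 2*j+1" by (auto elim: oddE)
    have "schr V0 \<phi>0 k - E * \<phi>0 k = \<phi>0 (2*j+1+1) + \<phi>0 (2*j) + (of_real v - E) * \<phi>0 (2*j+1)"
      unfolding k by (simp add: schr_def V0_def algebra_simps)
    also have "\<dots> = cis (\<theta> * of_int j) * (\<alpha> * (1 + cis \<theta>) - (E - of_real v) * \<beta>)"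
      unfolding ph_even' ph_odd ph_even by (simp add: algebra_simps)
    finally show ?thesis by (simp add: e2)
  qed
  have cis1: "cmod (cis x) = 1" for x by simp
  define G where "G = max (cmod \<alpha>) (cmod \<beta>)"
  have phG: "cmod (\<phi>0 k) \<le> G" for k by (simp add: \<phi>0_def norm_mult G_def)
  have G0: "0 \<le> G" by (simp add: G_def le_max_iff_disj)
  define \<gamma> where "\<gamma> = (cmod \<alpha>)^2 + (cmod \<beta>)^2"
  have \<gamma>0: "0 < \<gamma>" using ab by (auto simp: \<gamma>_def add_pos_nonneg add_nonneg_pos)
  have B0: "0 \<le> B" using Bd[of 0] by linarith
  define Q where "Q = (2 + B + cmod E) * G"
  obtain n :: nat where n: "(\<bar>C\<bar> * 2 * Q)^2 / \<gamma> < real n" using reals_Archimedean2 by blast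
  define L where "L = n"
  have Lbig: "(\<bar>C\<bar> * 2 * Q)^2 < (real L + 1) * \<gamma>"
  proof -
    have "(\<bar>C\<bar> * 2 * Q)^2 < real n * \<gamma>" using n \<gamma>0 by (simp add: divide_less_eq)
    also have "\<dots> \<le> (real L + 1) * \<gamma>" using \<gamma>0 by (simp add: L_def)
    finally show ?thesis .
  qed
  obtain a where blkL: "\<And>k. 2*a - 1 \<le> k \<Longrightarrow> k \<le> 2*a + 2*int L + 2 \<Longrightarrow> V k = V0 k"
    using blk[of L] unfolding V0_def by blast
  define S where "S = (\<lambda>i::nat. 2*a + int i) ` {..<2*L+2}"
  have finS: "finite S" by (simp add: S_def)
  have memS: "k \<in> S \<longleftrightarrow> 2*a \<le> k \<and> k \<le> 2*a + 2*int L + 1" for k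
  proof
    assume "k \<in> S" then show "2*a \<le> k \<and> k \<le> 2*a + 2*int L + 1" by (auto simp: S_def)
  next
    assume h: "2*a \<le> k \<and> k \<le> 2*a + 2*int L + 1"
    then have "k = 2*a + int (nat (k - 2*a))" "nat (k - 2*a) < 2*L+2" by auto
    then show "k \<in> S" unfolding S_def by blast
  qed
  define \<psi> where "\<psi> k = (if k \<in> S then \<phi>0 k else 0)" for k
  have psil2: "\<psi> \<in> l2" and NsqPsi: "Nsq \<psi> = (\<Sum>k\<in>S. (cmod (\<psi> k))^2)"
    using finite_support_l2[OF finS, of \<psi>] by (auto simp: \<psi>_def)
  have sumL: "(\<Sum>i<2*L'+2. (cmod (\<phi>0 (2*a + int i)))^2) = (real L' + 1) * \<gamma>" for L' :: nat
  proof (induction L')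
    case 0
    have "(\<Sum>i<2*0+2. (cmod (\<phi>0 (2*a + int i)))^2) = (cmod (\<phi>0 (2*a)))^2 + (cmod (\<phi>0 (2*a+1)))^2"
      by (simp add: numeral_2_eq_2)
    then show ?case by (simp add: ph_even ph_odd norm_mult \<gamma>_def)
  next
    case (Suc L')
    have e: "2 * Suc L' + 2 = Suc (Suc (2*L'+2))" by simp
    have i1: "2*a + int (2*L'+2) = 2*(a + int L' + 1)" by simp
    have i2: "2*a + int (Suc (2*L'+2)) = 2*(a + int L' + 1) + 1" by simp
    have "(\<Sum>i<2 * Suc L' + 2. (cmod (\<phi>0 (2*a + int i)))^2)
        = (\<Sum>i<2*L'+2. (cmod (\<phi>0 (2*a + int i)))^2) + (cmod (\<phi>0 (2*a + int (2*L'+2))))^2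
          + (cmod (\<phi>0 (2*a + int (Suc (2*L'+2)))))^2"
      unfolding e by simp
    also have "\<dots> = (real L' + 1) * \<gamma> + \<gamma>"
    proof -
      have v1: "(cmod (\<phi>0 (2*a + int (2*L'+2))))^2 = (cmod \<alpha>)^2"
        by (subst i1) (simp only: ph_even norm_mult cis1 mult_1_right)
      have v2: "(cmod (\<phi>0 (2*a + int (Suc (2*L'+2)))))^2 = (cmod \<beta>)^2"
        by (subst i2) (simp only: ph_odd norm_mult cis1 mult_1_right)
      show ?thesis by (simp only: v1 v2 Suc.IH \<gamma>_def add.assoc)
    qed
    finally show ?case by (simp add: algebra_simps)
  qed
  have NsqPsi2: "Nsq \<psi> = (real L + 1) * \<gamma>"
  proof -
    have "Nsq \<psi> = (\<Sum>k\<in>S. (cmod (\<phi>0 k))^2)" unfolding NsqPsi by (rule sum.cong) (auto simp: \<psi>_def)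
    also have "\<dots> = (\<Sum>i<2*L+2. (cmod (\<phi>0 (2*a + int i)))^2)"
      unfolding S_def by (subst sum.reindex) (auto simp: inj_on_def)
    also have "\<dots> = (real L + 1) * \<gamma>" by (rule sumL)
    finally show ?thesis .
  qed
  define f where "f k = schr V \<psi> k - E * \<psi> k" for k
  define F4 where "F4 = {2*a-1, 2*a, 2*a+2*int L+1, 2*a+2*int L+2}"
  have fzero: "f k = 0" if "k \<notin> F4" for k
  proof (cases "2*a+1 \<le> k \<and> k \<le> 2*a + 2*int L")
    case True
    then have "\<psi> k = \<phi>0 k" "\<psi> (k+1) = \<phi>0 (k+1)" "\<psi> (k-1) = \<phi>0 (k-1)" by (auto simp: \<psi>_def memS)
    moreover have "V k = V0 k" using True by (intro blkL) auto
    ultimately have "f k = schr V0 \<phi>0 k - E * \<phi>0 k" by (simp add: f_def schr_def)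
    then show ?thesis using eig by simp
  next
    case False
    then have "k < 2*a - 1 \<or> k > 2*a + 2*int L + 2" using that by (auto simp: F4_def)
    then have "\<psi> k = 0" "\<psi> (k+1) = 0" "\<psi> (k-1) = 0" by (auto simp: \<psi>_def memS)
    then show ?thesis by (simp add: f_def schr_def)
  qed
  have psiG: "cmod (\<psi> k) \<le> G" for k using phG G0 by (simp add: \<psi>_def)
  have fQ: "cmod (f k) \<le> Q" for k
  proof -
    have "cmod (f k) = cmod (\<psi> (k+1) + \<psi> (k-1) + (of_real (V k) - E) * \<psi> k)"
      by (simp add: f_def schr_def algebra_simps)
    also have "\<dots> \<le> cmod (\<psi> (k+1)) + cmod (\<psi> (k-1)) + cmod (of_real (V k) - E) * cmod (\<psi> k)"
      by (metis norm_triangle_le norm_mult add_mono order_refl norm_triangle_ineq)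
    also have "\<dots> \<le> G + G + (B + cmod E) * G"
    proof (intro add_mono psiG mult_mono)
      show "cmod (complex_of_real (V k) - E) \<le> B + cmod E"
        using Bd[of k] by (metis norm_triangle_ineq4 norm_of_real add_mono order_refl order_trans)
    qed (use B0 G0 in auto)
    finally show ?thesis by (simp add: Q_def algebra_simps)
  qed
  have Q0: "0 \<le> Q" using B0 G0 by (simp add: Q_def)
  have finF4: "finite F4" by (simp add: F4_def)
  have fl2: "f \<in> l2" and Nsqf: "Nsq f = (\<Sum>k\<in>F4. (cmod (f k))^2)"
    using finite_support_l2[OF finF4, of f] fzero by auto
  have "Nsq f \<le> (\<Sum>k\<in>F4. Q^2)" unfolding Nsqf by (intro sum_mono power_mono fQ) auto
  also have "\<dots> = real (card F4) * Q^2" by simp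
  also have "\<dots> \<le> 4 * Q^2"
  proof -
    have "card F4 \<le> 4" unfolding F4_def by (rule order_trans[OF card_insert_le_m1]) (auto intro: card_insert_le_m1 order_trans)
    then show ?thesis by (intro mult_right_mono) auto
  qed
  finally have "Nsq f \<le> (2 * Q)^2" by (simp add: power_mult_distrib)
  then have lf: "l2norm f \<le> 2 * Q" using Q0 by (simp add: l2norm_Nsq real_sqrt_le_iff real_le_lsqrt)
  have "R f = \<psi>" using RR[OF psil2] by (simp add: f_def[abs_def])
  then have "l2norm \<psi> \<le> C * l2norm f" using RC[OF fl2] by simp
  also have "\<dots> \<le> \<bar>C\<bar> * l2norm f" using l2norm_nonneg[of f] by (intro mult_right_mono) auto
  also have "\<dots> \<le> \<bar>C\<bar> * (2 * Q)" using lf by (intro mult_left_mono) auto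
  finally have "sqrt ((real L + 1) * \<gamma>) \<le> \<bar>C\<bar> * 2 * Q" by (simp add: l2norm_Nsq NsqPsi2 mult_ac)
  then have "(real L + 1) * \<gamma> \<le> (\<bar>C\<bar> * 2 * Q)^2"
    using Q0 \<gamma>0 by (metis real_sqrt_le_iff real_sqrt_pow2 power_mono real_sqrt_ge_zero add_nonneg_nonneg
        mult_nonneg_nonneg of_nat_0_le_iff zero_le_one less_imp_le)
  then show False using Lbig by linarith
qed

lemma coord_indep:
  fixes p :: "'a pmf"
  defines "P \<equiv> PiM (UNIV :: int set) (\<lambda>_. measure_pmf p)"
  shows "prob_space.indep_vars P (\<lambda>_. measure_pmf p) (\<lambda>i x. x i) UNIV"
proof -
  interpret product_prob_space "\<lambda>_::int. measure_pmf p" UNIV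
    by unfold_locales (simp add: prob_space_measure_pmf)
  have ps: "prob_space P" unfolding P_def by (rule P.prob_space_axioms)
  have rv: "(\<lambda>x. x i) \<in> measurable P (measure_pmf p)" for i
    unfolding P_def by (rule measurable_component_singleton) simp
  have iff: "prob_space.indep_vars P (\<lambda>_. measure_pmf p) (\<lambda>i x. x i) UNIV \<longleftrightarrow>
      distr P (\<Pi>\<^sub>M i\<in>UNIV. measure_pmf p) (\<lambda>x. \<lambda>i\<in>UNIV. x i) =
      (\<Pi>\<^sub>M i\<in>UNIV. distr P (measure_pmf p) (\<lambda>x. x i))"
    by (rule prob_space.indep_vars_iff_distr_eq_PiM'[OF ps]) (simp, rule rv)
  have "distr P (measure_pmf p) (\<lambda>x. x i) = measure_pmf p" for i
    unfolding P_def by (rule distr_PiM_component) (auto simp: prob_space_measure_pmf)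
  then have r: "(\<Pi>\<^sub>M i\<in>UNIV. distr P (measure_pmf p) (\<lambda>x. x i)) = P"
    unfolding P_def by (intro PiM_cong) auto
  have l: "distr P (\<Pi>\<^sub>M i\<in>UNIV. measure_pmf p) (\<lambda>x. \<lambda>i\<in>UNIV. x i) = P"
    unfolding P_def restrict_UNIV by simp
  show ?thesis using iff l r by simp
qed

lemma window_div:
  fixes m :: int and L j :: nat
  assumes "2 * (int j * (int L + 1)) \<le> m" "m \<le> 2 * (int j * (int L + 1)) + int L"
  shows "m div (2 * (int L + 1)) = int j"
proof (rule int_div_pos_eq)
  show "m = 2 * (int L + 1) * int j + (m - 2 * (int j * (int L + 1)))" by (simp add: algebra_simps)
qed (use assms in auto)

lemma ae_window:
  fixes p :: "'a::finite pmf" and w :: "int \<Rightarrow> 'a" and L :: nat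
  assumes pos: "\<forall>a. pmf p a > 0"
  shows "AE x in PiM (UNIV :: int set) (\<lambda>_. measure_pmf p). \<exists>t::int. \<forall>m. 2*t \<le> m \<and> m \<le> 2*t + int L \<longrightarrow> x m = w m"
proof -
  define P where "P = PiM (UNIV :: int set) (\<lambda>_. measure_pmf p)"
  interpret product_prob_space "\<lambda>_::int. measure_pmf p" UNIV
    by unfold_locales (simp add: prob_space_measure_pmf)
  interpret ps: prob_space P unfolding P_def by (rule P.prob_space_axioms)
  have spP: "space P = UNIV" by (simp add: P_def space_PiM)
  define K where "K j = {2 * (int j * (int L + 1)) .. 2 * (int j * (int L + 1)) + int L}" for j :: nat
  have finK: "finite (K j)" for j by (simp add: K_def)
  have cardK: "card (K j) = L + 1" for j by (simp add: K_def)
  have Kdisj: "disjoint_family_on K UNIV"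
    unfolding disjoint_family_on_def
  proof (intro ballI impI)
    fix i j :: nat assume "i \<noteq> j"
    show "K i \<inter> K j = {}"
    proof (rule ccontr)
      assume "K i \<inter> K j \<noteq> {}"
      then obtain m where "m \<in> K i" "m \<in> K j" by blast
      then have "m div (2 * (int L + 1)) = int i" "m div (2 * (int L + 1)) = int j"
        unfolding K_def by (auto intro: window_div simp del: distrib_left_numeral)
      then show False using \<open>i \<noteq> j\<close> by simp
    qed
  qed
  have ind: "ps.indep_vars (\<lambda>j. PiM (K j) (\<lambda>_. measure_pmf p)) (\<lambda>j x. restrict (\<lambda>i. x i) (K j)) UNIV"
    by (rule ps.indep_vars_restrict[OF coord_indep[of p, folded P_def] _ Kdisj]) auto
  define A where "A j = space (PiM (K j) (\<lambda>_. measure_pmf p)) - (\<Pi>\<^sub>E m\<in>K j. {w m})" for j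
  have Asets: "A j \<in> sets (PiM (K j) (\<lambda>_. measure_pmf p))" for j
    unfolding A_def by (intro sets.compl_sets sets_PiM_I_finite finK) auto
  define B where "B j = {x. \<exists>m\<in>K j. x m \<noteq> w m}" for j
  have preB: "(\<lambda>x. restrict (\<lambda>i. x i) (K j)) -` A j \<inter> space P = B j" for j
    by (auto simp: A_def B_def spP space_PiM PiE_iff restrict_def)
  define S where "S j = prod_emb UNIV (\<lambda>_. measure_pmf p) (K j) (\<Pi>\<^sub>E m\<in>K j. {w m})" for j
  have SB: "space P - S j = B j" for j
    by (auto simp: S_def B_def spP prod_emb_def PiE_iff space_PiM restrict_def)
  have Sev: "S j \<in> ps.events" for j
    unfolding S_def P_def by (intro measurable_prod_emb sets_PiM_I_finite finK) auto
  define \<pi> where "\<pi> = Min (range (pmf p))"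
  have \<pi>0: "0 < \<pi>" unfolding \<pi>_def using pos by (subst Min_gr_iff) auto
  have \<pi>le: "\<pi> \<le> pmf p a" for a unfolding \<pi>_def by (rule Min_le) auto
  define \<delta> where "\<delta> = \<pi> ^ (L+1)"
  have \<delta>0: "0 < \<delta>" using \<pi>0 by (simp add: \<delta>_def)
  have probS: "\<delta> \<le> ps.prob (S j)" for j
  proof -
    have "ps.prob (S j) = (\<Prod>m\<in>K j. measure (measure_pmf p) {w m})"
      unfolding S_def P_def by (rule measure_PiM_emb) (auto simp: finK)
    also have "\<dots> = (\<Prod>m\<in>K j. pmf p (w m))" by (simp add: measure_pmf_single)
    also have "\<dots> \<ge> (\<Prod>m\<in>K j. \<pi>)" by (intro prod_mono) (auto simp: \<pi>le less_imp_le[OF \<pi>0])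
    finally show ?thesis by (simp add: cardK \<delta>_def)
  qed
  have probB: "ps.prob (B j) \<le> 1 - \<delta>" for j
    using probS[of j] ps.prob_compl[OF Sev[of j]] SB[of j] by simp
  have Bev: "B j \<in> ps.events" for j using SB[of j] Sev[of j] by (metis sets.compl_sets)
  have probInt: "ps.prob (\<Inter>j\<in>{..<Suc J}. B j) \<le> (1 - \<delta>) ^ Suc J" for J
  proof -
    have "ps.prob (\<Inter>j\<in>{..<Suc J}. (\<lambda>x. restrict (\<lambda>i. x i) (K j)) -` A j \<inter> space P)
        = (\<Prod>j\<in>{..<Suc J}. ps.prob ((\<lambda>x. restrict (\<lambda>i. x i) (K j)) -` A j \<inter> space P))"
      by (rule ps.indep_varsD[OF ind]) (auto simp: Asets)
    then have "ps.prob (\<Inter>j\<in>{..<Suc J}. B j) = (\<Prod>j\<in>{..<Suc J}. ps.prob (B j))" by (simp add: preB)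
    also have "\<dots> \<le> (\<Prod>j\<in>{..<Suc J}. 1 - \<delta>)" by (intro prod_mono) (auto simp: probB)
    finally show ?thesis by simp
  qed
  define N where "N = (\<Inter>j. B j)"
  have Nev: "N \<in> ps.events" unfolding N_def using Bev by auto
  have probN: "ps.prob N \<le> (1 - \<delta>) ^ Suc J" for J
  proof -
    have "ps.prob N \<le> ps.prob (\<Inter>j\<in>{..<Suc J}. B j)"
      by (rule ps.finite_measure_mono) (use Bev in \<open>auto simp: N_def\<close>)
    then show ?thesis using probInt[of J] by linarith
  qed
  have "ps.prob N = 0"
  proof (rule ccontr)
    assume "ps.prob N \<noteq> 0"
    then have Np: "0 < ps.prob N" using measure_nonneg[of P N] by linarith
    obtain n where "(1 - \<delta>) ^ n < ps.prob N" using real_arch_pow_inv[OF Np, of "1 - \<delta>"] \<delta>0 by auto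
    moreover have "0 \<le> 1 - \<delta>" using probB[of 0] measure_nonneg[of P "B 0"] by linarith
    then have "(1 - \<delta>) ^ Suc n \<le> (1 - \<delta>) ^ n" using \<delta>0 by (intro power_decreasing) auto
    ultimately show False using probN[of n] by linarith
  qed
  then have Nnull: "N \<in> null_sets P" using Nev by (simp add: ps.emeasure_eq_measure null_sets_def)
  have "AE x in P. \<exists>t::int. \<forall>m. 2*t \<le> m \<and> m \<le> 2*t + int L \<longrightarrow> x m = w m"
  proof (rule AE_I'[OF Nnull], safe)
    fix x assume nt: "\<not> (\<exists>t::int. \<forall>m. 2*t \<le> m \<and> m \<le> 2*t + int L \<longrightarrow> x m = w m)"
    show "x \<in> N" unfolding N_def
    proof
      fix j :: nat
      show "x \<in> B j" using nt[unfolded not_ex, rule_format, of "int j * (int L + 1)"]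
        by (auto simp: B_def K_def)
    qed
  qed
  then show ?thesis unfolding P_def .
qed

lemma per2:
  fixes Vper :: "int \<Rightarrow> real"
  assumes per: "\<forall>k. Vper (k + 2) = Vper k"
  shows "Vper k = (if even k then Vper 0 else Vper 1)"
proof -
  have up: "Vper (r + 2 * int j) = Vper r" for r and j :: nat
  proof (induction j)
    case (Suc j)
    have "Vper (r + 2 * int (Suc j)) = Vper ((r + 2 * int j) + 2)" by (simp add: algebra_simps)
    also have "\<dots> = Vper r" using per Suc by simp
    finally show ?case .
  qed simp
  have down: "Vper (r - 2 * int j) = Vper r" for r and j :: nat
  proof (induction j)
    case (Suc j)
    have "Vper (r - 2 * int j) = Vper ((r - 2 * int (Suc j)) + 2)" by (simp add: algebra_simps)
    also have "\<dots> = Vper (r - 2 * int (Suc j))" using per by blast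
    finally show ?case using Suc by simp
  qed simp
  have dm: "k = k mod 2 + 2 * (k div 2)" by simp
  have "Vper k = Vper (k mod 2)"
  proof (cases "k div 2 \<ge> 0")
    case True
    then have "k = k mod 2 + 2 * int (nat (k div 2))" by simp
    then show ?thesis using up[of "k mod 2" "nat (k div 2)"] by metis
  next
    case False
    then have "k = k mod 2 - 2 * int (nat (- (k div 2)))" by simp
    then show ?thesis using down[of "k mod 2" "nat (- (k div 2))"] by metis
  qed
  moreover have "k mod 2 = (if even k then 0 else 1)" by (simp add: even_iff_mod_2_eq_zero odd_iff_mod_2_eq_one)
  ultimately show ?thesis by simp
qed

lemma good_ae:
  fixes p :: "'a::finite pmf"
  assumes pos: "\<forall>a. pmf p a > 0"
  shows "AE x in PiM (UNIV :: int set) (\<lambda>_. measure_pmf p).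
     \<forall>a\<in>UNIV. \<forall>b\<in>UNIV. \<forall>L::nat. \<exists>t::int. \<forall>m. 2*t \<le> m \<and> m \<le> 2*t + int L \<longrightarrow> x m = xab a b m"
proof (intro AE_finite_allI)
  fix a b :: 'a
  show "AE x in PiM (UNIV :: int set) (\<lambda>_. measure_pmf p).
     \<forall>L::nat. \<exists>t::int. \<forall>m. 2*t \<le> m \<and> m \<le> 2*t + int L \<longrightarrow> x m = xab a b m"
    unfolding AE_all_countable using ae_window[OF pos] by blast
qed auto

theorem theorem1p4:
  fixes p :: "'a::finite pmf" and g :: "'a \<Rightarrow> real" and n :: int
    and Vper :: "int \<Rightarrow> real"
  assumes "\<forall>a. pmf p a > 0"
    and "\<forall>k. Vper (k + 2) = Vper k"
  defines "f1 \<equiv> (\<lambda>x::int \<Rightarrow> 'a. g (x n))"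
  defines "H \<equiv> (\<lambda>x \<psi>. (\<lambda>k. laplacian \<psi> k + mult_op (\<lambda>j. f1 (Sshift j x)) \<psi> k))"
  shows "AE x in PiM (UNIV :: int set) (\<lambda>_. measure_pmf p).
           spectrum_op (\<lambda>\<psi> k. H x \<psi> k + mult_op Vper \<psi> k)
           = (\<Union>a. \<Union>b. spectrum_op (\<lambda>\<psi> k. H (xab a b) \<psi> k + mult_op Vper \<psi> k))"
proof -
  note pos = assms(1) and per = assms(2)
  define Vx where "Vx x k = g (x (k + n)) + Vper k" for x :: "int \<Rightarrow> 'a" and k
  have opeq: "(\<lambda>\<psi> k. H x \<psi> k + mult_op Vper \<psi> k) = schr (Vx x)" for x
    by (intro ext) (simp add: H_def f1_def laplacian_def mult_op_def Sshift_def schr_def Vx_def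
        algebra_simps add.commute[of n])
  have VP: "Vper k = (if even k then Vper 0 else Vper 1)" for k by (rule per2[OF per])
  define Ue where "Ue = range (\<lambda>c. g c + Vper 0)"
  define Uo where "Uo = range (\<lambda>c. g c + Vper 1)"
  have finU: "finite Ue" "finite Uo" by (simp_all add: Ue_def Uo_def)
  have VxU: "Vx x k \<in> (if even k then Ue else Uo)" for x k
    unfolding Vx_def by (subst VP) (auto simp: Ue_def Uo_def)
  define Bg where "Bg = Max (abs ` range g)"
  have Bg: "\<bar>g c\<bar> \<le> Bg" for c unfolding Bg_def by (rule Max_ge) auto
  define BB where "BB = Bg + \<bar>Vper 0\<bar> + \<bar>Vper 1\<bar>"
  have VxB: "\<bar>Vx x k\<bar> \<le> BB" for x k
  proof -
    have "\<bar>Vper k\<bar> \<le> \<bar>Vper 0\<bar> + \<bar>Vper 1\<bar>" by (subst VP) auto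
    then show ?thesis unfolding Vx_def BB_def
      using Bg[of "x (k+n)"] abs_triangle_ineq[of "g (x (k+n))" "Vper k"] by linarith
  qed
  define ca where "ca a b = (if even n then a else b)" for a b :: 'a
  define cb where "cb a b = (if even n then b else a)" for a b :: 'a
  have Vab: "Vx (xab a b) k = (if even k then g (ca a b) + Vper 0 else g (cb a b) + Vper 1)" for a b k
    unfolding Vx_def by (subst VP) (auto simp: xab_def ca_def cb_def)
  have sub: "spectrum_op (schr (Vx x)) \<subseteq> (\<Union>a. \<Union>b. spectrum_op (schr (Vx (xab a b))))" for x
  proof
    fix E assume E: "E \<in> spectrum_op (schr (Vx x))"
    show "E \<in> (\<Union>a. \<Union>b. spectrum_op (schr (Vx (xab a b))))"
    proof (rule ccontr)
      assume nE: "E \<notin> (\<Union>a. \<Union>b. spectrum_op (schr (Vx (xab a b))))"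
      have "E \<notin> spectrum_op (schr (Vx x))"
      proof (rule resolvent[OF finU VxU])
        fix u v r assume u: "u \<in> Ue" and v: "v \<in> Uo" and pr: "(E - of_real u) * (E - of_real v) = of_real r"
        show "r < 0 \<or> 4 < r"
        proof (rule ccontr)
          assume "\<not> (r < 0 \<or> 4 < r)"
          then have r0: "0 \<le> r" and r4: "r \<le> 4" by auto
          obtain c1 c2 where u': "u = g c1 + Vper 0" and v': "v = g c2 + Vper 1"
            using u v by (auto simp: Ue_def Uo_def)
          define a where "a = (if even n then c1 else c2)"
          define b where "b = (if even n then c2 else c1)"
          have VV: "Vx (xab a b) k = (if even k then u else v)" for k
            unfolding Vab u' v' by (simp add: ca_def cb_def a_def b_def)
          have "E \<in> spectrum_op (schr (Vx (xab a b)))"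
            by (rule weyl[OF VxB pr r0 r4]) (use VV in blast)
          then show False using nE by blast
        qed
      qed
      then show False using E by simp
    qed
  qed
  have sup: "spectrum_op (schr (Vx (xab a b))) \<subseteq> spectrum_op (schr (Vx x))"
    if good: "\<forall>a\<in>UNIV. \<forall>b\<in>UNIV. \<forall>L::nat. \<exists>t::int. \<forall>m. 2*t \<le> m \<and> m \<le> 2*t + int L \<longrightarrow> x m = xab a b m"
    for x a b
  proof
    fix E assume E: "E \<in> spectrum_op (schr (Vx (xab a b)))"
    define u where "u = g (ca a b) + Vper 0"
    define v where "v = g (cb a b) + Vper 1"
    have VV: "Vx (xab a b) k = (if even k then u else v)" for k unfolding Vab u_def v_def by simp
    obtain r where pr: "(E - of_real u) * (E - of_real v) = of_real r" and r0: "0 \<le> r" and r4: "r \<le> 4"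
    proof -
      have "\<not> (\<forall>u' v' r. u' \<in> {u} \<longrightarrow> v' \<in> {v} \<longrightarrow> (E - of_real u') * (E - of_real v') = of_real r \<longrightarrow> r < 0 \<or> 4 < r)"
      proof
        assume h: "\<forall>u' v' r. u' \<in> {u} \<longrightarrow> v' \<in> {v} \<longrightarrow> (E - of_real u') * (E - of_real v') = of_real r \<longrightarrow> r < 0 \<or> 4 < r"
        have "E \<notin> spectrum_op (schr (Vx (xab a b)))"
          by (rule resolvent[of "{u}" "{v}"]) (use VV h in auto)
        then show False using E by simp
      qed
      then show ?thesis using that by force
    qed
    show "E \<in> spectrum_op (schr (Vx x))"
    proof (rule weyl[OF VxB pr r0 r4])
      fix L :: nat
      obtain t where t: "\<And>m. 2*t \<le> m \<Longrightarrow> m \<le> 2*t + int (2*L+5) \<Longrightarrow> x m = xab a b m"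
        using good by blast
      define A where "A = t - n div 2 + 1"
      have "\<forall>k. 2*A - 1 \<le> k \<and> k \<le> 2*A + 2*int L + 2 \<longrightarrow> Vx x k = (if even k then u else v)"
      proof (intro allI impI)
        fix k assume k: "2*A - 1 \<le> k \<and> k \<le> 2*A + 2*int L + 2"
        have nn: "n = 2 * (n div 2) + n mod 2" "0 \<le> n mod 2" "n mod 2 \<le> 1" by auto
        have iL: "int (2*L+5) = 2 * int L + 5" by simp
        have m1: "2*t \<le> k + n" using k nn unfolding A_def ring_distribs by linarith
        have m2: "k + n \<le> 2*t + int (2*L+5)" using k nn iL unfolding A_def ring_distribs by linarith
        have "x (k + n) = xab a b (k + n)" by (rule t[OF m1 m2])
        then have "Vx x k = Vx (xab a b) k" by (simp add: Vx_def)
        then show "Vx x k = (if even k then u else v)" by (simp add: VV)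
      qed
      then show "\<exists>A. \<forall>k. 2*A - 1 \<le> k \<and> k \<le> 2*A + 2*int L + 2 \<longrightarrow> Vx x k = (if even k then u else v)" by blast
    qed
  qed
  show ?thesis
  proof (rule eventually_mono[OF good_ae[OF pos]])
    fix x :: "int \<Rightarrow> 'a" assume good: "\<forall>a\<in>UNIV. \<forall>b\<in>UNIV. \<forall>L::nat. \<exists>t::int. \<forall>m. 2*t \<le> m \<and> m \<le> 2*t + int L \<longrightarrow> x m = xab a b m"
    show "spectrum_op (\<lambda>\<psi> k. H x \<psi> k + mult_op Vper \<psi> k)
           = (\<Union>a. \<Union>b. spectrum_op (\<lambda>\<psi> k. H (xab a b) \<psi> k + mult_op Vper \<psi> k))"
      unfolding opeq using sub[of x] sup[OF good] by blast
  qed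
qed

end
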